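(* Consider the system, for $n\ge2$ and $j=1,\dots,n-1$, \[ y_{j,x}=2y_j(z_j+v)-\alpha_j,\quad z_{j,x}=-z_j(z_j+2v)-\mu_j,\qquad v=\frac2x(y_1z_1+\dots+y_{n-1}z_{n-1}+\beta), \] with constants $\alpha_1,\dots,\alpha_{n-1},\beta$ and pairwise distinct nonzero constants $\mu_1,\dots,\mu_{n-1}$. Put $y_n:=-\frac x2-y_1-\dots-y_{n-1}$ and $\alpha_n:=\frac12-2\beta-\alpha_1-\dots-\alpha_{n-1}$. Define the following transformations (the $\mu_j$ are never changed; unspecified quantities are unchanged). For $k=1,\dots,n-1$: $A_k$: $\tilde y_j=y_j$ for all $j$, $\tilde z_j=z_j$ ($j\neq k$), $\tilde z_k=z_k-\frac{\alpha_k}{y_k}$, $\tilde\alpha_k=-\alpha_k$, $\tilde\beta=\beta+\alpha_k$. $B_k$: $\tilde z_j=\frac{\mu_k}{z_k}-\frac{\mu_j-\mu_k}{z_j-z_k}$ ($j\ne k$), $\tilde z_k=\frac{\mu_k}{z_k}$; $\tilde y_j=\frac{z_j-z_k}{\mu_j-\mu_k}\bigl((z_j-z_k)y_j-\alpha_j\bigr)$ ($j\ne k$); $\tilde y_k=-\frac x2-\sum_{j\le n-1,\,j\neq k}\tilde y_j+\frac{z_k}{\mu_k}(z_ky_n+\alpha_n)$; $\tilde\alpha_j=\alpha_j$ ($j\neq k$), $\tilde\alpha_k=1-\alpha_k$, $\tilde\beta=\beta+\alpha_k-\frac12$. $A_n$: $\tilde y_j=y_j$, $\tilde z_j=z_j+\frac{\tilde\beta-\beta}{y_n}$,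 $\tilde\alpha_j=\alpha_j$, $\tilde\beta=\beta+\alpha_n$. $B_n$: $\tilde z_j=-\frac{\mu_j}{z_j}$, $\tilde y_j=\frac{z_j}{\mu_j}(z_jy_j-\alpha_j)$, $\tilde\alpha_j=\alpha_j$, $\tilde\beta=\beta+\alpha_n-\frac12$. Then each of $A_1,B_1,\dots,A_n,B_n$ maps solutions of the system with parameters $(\alpha_1,\dots,\alpha_{n-1},\beta)$ to solutions of the system with parameters $(\tilde\alpha_1,\dots,\tilde\alpha_{n-1},\tilde\beta)$, and they satisfy, for $j\neq k$ in $\{1,\dots,n\}$: $A_k^2=\mathrm{id}$, $A_jA_k=A_kA_j$, $B_k^2=\mathrm{id}$, $B_jB_k=B_kB_j$, $A_jB_k=B_kA_j$.
   Context: Formulas are considered where all denominators are nonzero; subscript $x$ denotes differentiation in $x$. *)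

theory Defs
  imports "HOL-Analysis.Analysis"
begin

text \<open>A state at a fixed point x: (y_1..y_{n-1}, z_1..z_{n-1}, alpha_1..alpha_{n-1}, beta),
  stored as functions on nat; only indices 1..n-1 are meaningful, all others are left unchanged
  by the transformations.\<close>
type_synonym state = "(nat \<Rightarrow> complex) \<times> (nat \<Rightarrow> complex) \<times> (nat \<Rightarrow> complex) \<times> complex"

definition yN :: "nat \<Rightarrow> complex \<Rightarrow> (nat \<Rightarrow> complex) \<Rightarrow> complex" where
  "yN n x Y = - x / 2 - (\<Sum>j=1..n-1. Y j)"

definition alphaN :: "nat \<Rightarrow> (nat \<Rightarrow> complex) \<Rightarrow> complex \<Rightarrow> complex" where
  "alphaN n a b = 1/2 - 2 * b - (\<Sum>j=1..n-1. a j)"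

definition vv :: "nat \<Rightarrow> complex \<Rightarrow> (nat \<Rightarrow> complex \<Rightarrow> complex) \<Rightarrow> (nat \<Rightarrow> complex \<Rightarrow> complex) \<Rightarrow> complex \<Rightarrow> complex" where
  "vv n b y z x = 2 / x * ((\<Sum>j=1..n-1. y j x * z j x) + b)"

definition sys_solution :: "nat \<Rightarrow> (nat \<Rightarrow> complex) \<Rightarrow> (nat \<Rightarrow> complex) \<Rightarrow> complex \<Rightarrow> complex set
    \<Rightarrow> (nat \<Rightarrow> complex \<Rightarrow> complex) \<Rightarrow> (nat \<Rightarrow> complex \<Rightarrow> complex) \<Rightarrow> bool" where
  "sys_solution n mu a b S y z \<longleftrightarrow> (\<forall>x\<in>S. \<forall>j\<in>{1..n-1}.
     (y j has_field_derivative (2 * y j x * (z j x + vv n b y z x) - a j)) (at x) \<and>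
     (z j has_field_derivative (- z j x * (z j x + 2 * vv n b y z x) - mu j)) (at x))"

text \<open>Transformations A_k (k = 1..n) as partial maps: None where some denominator vanishes.\<close>
definition trA :: "nat \<Rightarrow> (nat \<Rightarrow> complex) \<Rightarrow> nat \<Rightarrow> complex \<Rightarrow> state \<Rightarrow> state option" where
  "trA n mu k x s = (case s of (Y, Z, a, b) \<Rightarrow>
     if k = n then
       (if yN n x Y \<noteq> 0 then
          Some (Y, (\<lambda>j. if j \<in> {1..n-1} then Z j + ((b + alphaN n a b) - b) / yN n x Y else Z j),
                a, b + alphaN n a b)
        else None)
     else
       (if Y k \<noteq> 0 then
          Some (Y, Z(k := Z k - a k / Y k), a(k := - a k), b + a k)
        else None))"

definition trB :: "nat \<Rightarrow> (nat \<Rightarrow> complex) \<Rightarrow> nat \<Rightarrow> complex \<Rightarrow> state \<Rightarrow> state option" where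
  "trB n mu k x s = (case s of (Y, Z, a, b) \<Rightarrow>
     if k = n then
       (if (\<forall>j\<in>{1..n-1}. Z j \<noteq> 0 \<and> mu j \<noteq> 0) then
          Some ((\<lambda>j. if j \<in> {1..n-1} then Z j / mu j * (Z j * Y j - a j) else Y j),
                (\<lambda>j. if j \<in> {1..n-1} then - mu j / Z j else Z j),
                a, b + alphaN n a b - 1/2)
        else None)
     else
       (if Z k \<noteq> 0 \<and> mu k \<noteq> 0 \<and> (\<forall>j\<in>{1..n-1} - {k}. Z j \<noteq> Z k \<and> mu j \<noteq> mu k) then
          (let Yo = (\<lambda>j. (Z j - Z k) / (mu j - mu k) * ((Z j - Z k) * Y j - a j)) in
          Some ((\<lambda>j. if j \<in> {1..n-1} - {k} then Yo j
                     else if j = k then - x / 2 - (\<Sum>i\<in>{1..n-1} - {k}. Yo i)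
                                      + Z k / mu k * (Z k * yN n x Y + alphaN n a b)
                     else Y j),
                (\<lambda>j. if j \<in> {1..n-1} - {k} then mu k / Z k - (mu j - mu k) / (Z j - Z k)
                     else if j = k then mu k / Z k
                     else Z j),
                a(k := 1 - a k), b + a k - 1/2))
        else None))"

definition bt_map :: "bool \<Rightarrow> nat \<Rightarrow> (nat \<Rightarrow> complex) \<Rightarrow> nat \<Rightarrow> complex \<Rightarrow> state \<Rightarrow> state option" where
  "bt_map c n mu k x s = (if c then trB n mu k x s else trA n mu k x s)"

end

theory Submission
  imports Defs
begin


lemma sum_upd: fixes f :: "'a \<Rightarrow> 'b::ab_group_add" shows "finite A \<Longrightarrow> k \<in> A \<Longrightarrow> sum (f(k:=v)) A = sum f A - f k + v"
  by (simp add: sum.remove)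

lemma alphaN_Ak: "k \<in> {1..n-1} \<Longrightarrow> alphaN n (a(k := - a k)) (b + a k) = alphaN n a b"
  by (simp add: alphaN_def sum_upd algebra_simps del: fun_upd_apply)

lemma alphaN_Bk: "k \<in> {1..n-1} \<Longrightarrow> alphaN n (a(k := 1 - a k)) (b + a k - 1/2) = alphaN n a b"
  by (simp add: alphaN_def sum_upd algebra_simps del: fun_upd_apply)

lemma alphaN_An: "alphaN n a (b + alphaN n a b) = - alphaN n a b"
  by (simp add: alphaN_def algebra_simps)

lemma alphaN_Bn: "alphaN n a (b + alphaN n a b - 1/2) = 1 - alphaN n a b"
  by (simp add: alphaN_def algebra_simps)

lemma trA_k: "k \<noteq> n \<Longrightarrow> trA n mu k x (Y,Z,a,b) = (if Y k \<noteq> 0 then Some (Y, Z(k := Z k - a k / Y k), a(k := - a k), b + a k) else None)"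
  by (simp add: trA_def)

lemma trA_n: "trA n mu n x (Y,Z,a,b) = (if yN n x Y \<noteq> 0 then Some (Y, \<lambda>j. if j\<in>{1..n-1} then Z j + alphaN n a b / yN n x Y else Z j, a, b + alphaN n a b) else None)"
  by (auto simp add: trA_def)

lemma trB_n: "trB n mu n x (Y,Z,a,b) = (if (\<forall>j\<in>{1..n-1}. Z j \<noteq> 0 \<and> mu j \<noteq> 0) then
          Some ((\<lambda>j. if j \<in> {1..n-1} then Z j / mu j * (Z j * Y j - a j) else Y j),
                (\<lambda>j. if j \<in> {1..n-1} then - mu j / Z j else Z j),
                a, b + alphaN n a b - 1/2)
        else None)"
  by (simp add: trB_def)

definition Yo :: "(nat \<Rightarrow> complex) \<Rightarrow> nat \<Rightarrow> (nat \<Rightarrow> complex) \<Rightarrow> (nat \<Rightarrow> complex) \<Rightarrow> (nat \<Rightarrow> complex) \<Rightarrow> nat \<Rightarrow> complex" where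
  "Yo mu k Y Z a j = (Z j - Z k) / (mu j - mu k) * ((Z j - Z k) * Y j - a j)"

definition condB :: "nat \<Rightarrow> (nat \<Rightarrow> complex) \<Rightarrow> nat \<Rightarrow> (nat \<Rightarrow> complex) \<Rightarrow> bool" where
  "condB n mu k Z \<longleftrightarrow> Z k \<noteq> 0 \<and> mu k \<noteq> 0 \<and> (\<forall>j\<in>{1..n-1} - {k}. Z j \<noteq> Z k \<and> mu j \<noteq> mu k)"

lemma trB_k: "k \<noteq> n \<Longrightarrow> trB n mu k x (Y,Z,a,b) = (if condB n mu k Z then
          Some ((\<lambda>j. if j \<in> {1..n-1} - {k} then Yo mu k Y Z a j
                     else if j = k then - x / 2 - (\<Sum>i\<in>{1..n-1} - {k}. Yo mu k Y Z a i)
                                      + Z k / mu k * (Z k * yN n x Y + alphaN n a b)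
                     else Y j),
                (\<lambda>j. if j \<in> {1..n-1} - {k} then mu k / Z k - (mu j - mu k) / (Z j - Z k)
                     else if j = k then mu k / Z k
                     else Z j),
                a(k := 1 - a k), b + a k - 1/2)
        else None)"
  unfolding trB_def condB_def Yo_def Let_def by simp


lemma inv_Ak: assumes "k \<noteq> n" "trA n mu k x (Y,Z,a,b) = Some s1" "trA n mu k x s1 = Some s2"
  shows "s2 = (Y,Z,a,b)"
  using assms by (auto simp: trA_k split: if_splits)

lemma inv_An: assumes "trA n mu n x (Y,Z,a,b) = Some s1" "trA n mu n x s1 = Some s2"
  shows "s2 = (Y,Z,a,b)"
proof -
  have c: "yN n x Y \<noteq> 0" using assms(1) by (auto simp: trA_n split: if_splits)
  have s1: "s1 = (Y, \<lambda>j. if j\<in>{1..n-1} then Z j + alphaN n a b / yN n x Y else Z j, a, b + alphaN n a b)"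
    using assms(1) c by (simp add: trA_n)
  have "s2 = (Y, \<lambda>j. if j\<in>{1..n-1} then (if j\<in>{1..n-1} then Z j + alphaN n a b / yN n x Y else Z j) + (- alphaN n a b) / yN n x Y else (if j\<in>{1..n-1} then Z j + alphaN n a b / yN n x Y else Z j), a, b + alphaN n a b + (- alphaN n a b))"
    using assms(2) c unfolding s1 trA_n alphaN_An by simp
  then show ?thesis by (auto intro!: ext)
qed

lemma inv_Bn: assumes "trB n mu n x (Y,Z,a,b) = Some s1" "trB n mu n x s1 = Some s2"
  shows "s2 = (Y,Z,a,b)"
proof -
  have c: "\<forall>j\<in>{1..n-1}. Z j \<noteq> 0 \<and> mu j \<noteq> 0" using assms(1) by (auto simp: trB_n split: if_splits)
  have s1: "s1 = ((\<lambda>j. if j \<in> {1..n-1} then Z j / mu j * (Z j * Y j - a j) else Y j),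
                (\<lambda>j. if j \<in> {1..n-1} then - mu j / Z j else Z j),
                a, b + alphaN n a b - 1/2)" using assms(1) c by (simp add: trB_n)
  have c2: "\<forall>j\<in>{1..n-1}. - mu j / Z j \<noteq> 0" using c by auto
  have "s2 = ((\<lambda>j. if j \<in> {1..n-1} then (- mu j / Z j) / mu j * ((- mu j / Z j) * (Z j / mu j * (Z j * Y j - a j)) - a j) else Y j),
                (\<lambda>j. if j \<in> {1..n-1} then - mu j / (- mu j / Z j) else Z j),
                a, b + alphaN n a b - 1/2 + (1 - alphaN n a b) - 1/2)"
    using assms(2) c c2 unfolding s1 trB_n alphaN_Bn by (auto intro!: ext)
  then show ?thesis using c by (auto intro!: ext simp: field_simps)
qed


lemma Yo_inv0:
  assumes "(D::complex) \<noteq> 0" "E \<noteq> 0"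
  shows "(c - E / D - c) / E * ((c - E / D - c) * (D / E * (D * Yj - aj)) - aj) = Yj"
  using assms by (simp add: field_simps)

lemma Yo_inv:
  assumes "(Zk::complex) \<noteq> 0" "muk \<noteq> 0" "Zj \<noteq> Zk" "muj \<noteq> muk"
  shows "((muk / Zk - (muj - muk) / (Zj - Zk)) - muk / Zk) / (muj - muk) *
          (((muk / Zk - (muj - muk) / (Zj - Zk)) - muk / Zk) * ((Zj - Zk) / (muj - muk) * ((Zj - Zk) * Yj - aj)) - aj) = Yj"
  using Yo_inv0[of "Zj - Zk" "muj - muk"] assms by simp

lemma Z_inv0:
  assumes "(Zk::complex) \<noteq> 0" "muk \<noteq> 0" "D \<noteq> 0" "E \<noteq> 0"
  shows "muk / (muk / Zk) - E / ((muk / Zk - E / D) - muk / Zk) = Zk + D"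
  using assms by (simp add: field_simps)

lemma Z_inv:
  assumes "(Zk::complex) \<noteq> 0" "muk \<noteq> 0" "Zj \<noteq> Zk" "muj \<noteq> muk"
  shows "muk / (muk / Zk) - (muj - muk) / ((muk / Zk - (muj - muk) / (Zj - Zk)) - muk / Zk) = Zj"
  using Z_inv0[of Zk muk "Zj - Zk" "muj - muk"] assms by simp

lemma inv_Bk: assumes k: "k \<in> {1..n-1}" and "trB n mu k x (Y,Z,a,b) = Some s1" "trB n mu k x s1 = Some s2"
  shows "s2 = (Y,Z,a,b)"
proof -
  have kn: "k \<noteq> n" using k by auto
  have c: "condB n mu k Z" using assms(2) kn by (auto simp: trB_k split: if_splits)
  define Y1 where "Y1 = (\<lambda>j. if j \<in> {1..n-1} - {k} then Yo mu k Y Z a j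
                     else if j = k then - x / 2 - (\<Sum>i\<in>{1..n-1} - {k}. Yo mu k Y Z a i)
                                      + Z k / mu k * (Z k * yN n x Y + alphaN n a b)
                     else Y j)"
  define Z1 where "Z1 = (\<lambda>j. if j \<in> {1..n-1} - {k} then mu k / Z k - (mu j - mu k) / (Z j - Z k)
                     else if j = k then mu k / Z k
                     else Z j)"
  have s1: "s1 = (Y1, Z1, a(k := 1 - a k), b + a k - 1/2)"
    using assms(2) by (simp add: trB_k[OF kn] c Y1_def Z1_def)
  have c1: "condB n mu k Z1" using assms(3) kn unfolding s1 by (auto simp: trB_k split: if_splits)
  have s2: "s2 = ((\<lambda>j. if j \<in> {1..n-1} - {k} then Yo mu k Y1 Z1 (a(k := 1 - a k)) j
                     else if j = k then - x / 2 - (\<Sum>i\<in>{1..n-1} - {k}. Yo mu k Y1 Z1 (a(k := 1 - a k)) i)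
                                      + Z1 k / mu k * (Z1 k * yN n x Y1 + alphaN n (a(k := 1 - a k)) (b + a k - 1/2))
                     else Y1 j),
                (\<lambda>j. if j \<in> {1..n-1} - {k} then mu k / Z1 k - (mu j - mu k) / (Z1 j - Z1 k)
                     else if j = k then mu k / Z1 k
                     else Z1 j),
                (a(k := 1 - a k))(k := 1 - (a(k := 1 - a k)) k), b + a k - 1/2 + (a(k := 1 - a k)) k - 1/2)"
    using assms(3) unfolding s1 by (simp add: trB_k[OF kn] c1)
  have cz: "Z k \<noteq> 0" "mu k \<noteq> 0" and cj: "\<And>j. j \<in> {1..n-1} - {k} \<Longrightarrow> Z j \<noteq> Z k \<and> mu j \<noteq> mu k"
    using c unfolding condB_def by auto
  have YoK: "Yo mu k Y1 Z1 (a(k := 1 - a k)) j = Y j" if "j \<in> {1..n-1} - {k}" for j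
  proof -
    have "j \<noteq> k" using that by auto
    then show ?thesis using that cz cj[OF that] unfolding Yo_def Y1_def Z1_def
      by (simp add: Yo_def Yo_inv)
  qed
  have fin: "finite ({1..n-1} - {k})" by simp
  have sumY: "sum Y {1..n-1} = Y k + sum Y ({1..n-1} - {k})"
    using k by (simp add: sum.remove)
  have sumY1: "sum Y1 {1..n-1} = Y1 k + (\<Sum>i\<in>{1..n-1} - {k}. Yo mu k Y Z a i)"
    using k by (simp add: sum.remove Y1_def)
  have yN1: "yN n x Y1 = - (Z k / mu k * (Z k * yN n x Y + alphaN n a b))"
    unfolding yN_def sumY1 by (simp add: Y1_def yN_def)
  have Yk: "- x / 2 - (\<Sum>i\<in>{1..n-1} - {k}. Yo mu k Y1 Z1 (a(k := 1 - a k)) i)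
             + Z1 k / mu k * (Z1 k * yN n x Y1 + alphaN n (a(k := 1 - a k)) (b + a k - 1/2)) = Y k"
  proof -
    have "(\<Sum>i\<in>{1..n-1} - {k}. Yo mu k Y1 Z1 (a(k := 1 - a k)) i) = sum Y ({1..n-1} - {k})"
      using YoK by (rule sum.cong[OF refl])
    moreover have "Z1 k / mu k * (Z1 k * yN n x Y1 + alphaN n (a(k := 1 - a k)) (b + a k - 1/2)) = - yN n x Y"
      unfolding yN1 alphaN_Bk[OF k] using cz by (simp add: Z1_def field_simps)
    ultimately show ?thesis unfolding yN_def sumY by simp
  qed
  show ?thesis unfolding s2
    using YoK Yk cz cj by (auto intro!: ext simp: Z1_def Y1_def Z_inv)
qed



definition YB where "YB n mu k x Y Z a b = (\<lambda>j. if j \<in> {1..n-1} - {k} then Yo mu k Y Z a j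
                     else if j = k then - x / 2 - (\<Sum>i\<in>{1..n-1} - {k}. Yo mu k Y Z a i)
                                      + Z k / mu k * (Z k * yN n x Y + alphaN n a b)
                     else Y j)"
definition ZB where "ZB n mu k Z = (\<lambda>j. if j \<in> {1..n-1} - {k} then mu k / Z k - (mu j - mu k) / (Z j - Z k)
                     else if j = k then mu k / Z k
                     else (Z j::complex))"
definition YBn where "YBn n mu Y Z a = (\<lambda>j. if j \<in> {1..n-1} then Z j / mu j * (Z j * Y j - a j) else (Y j::complex))"
definition ZBn where "ZBn n mu Z = (\<lambda>j. if j \<in> {1..n-1} then - mu j / Z j else (Z j::complex))"
definition condBn where "condBn n mu Z \<longleftrightarrow> (\<forall>j\<in>{1..n-1}. Z j \<noteq> 0 \<and> mu j \<noteq> (0::complex))"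
definition ZAn where "ZAn n x Y Z a b = (\<lambda>j. if j\<in>{1..n-1} then Z j + alphaN n a b / yN n x Y else Z j)"

lemma trB_k': "k \<noteq> n \<Longrightarrow> trB n mu k x (Y,Z,a,b) = (if condB n mu k Z then
   Some (YB n mu k x Y Z a b, ZB n mu k Z, a(k:=1-a k), b + a k - 1/2) else None)"
  unfolding trB_k YB_def ZB_def by simp

lemma trB_n': "trB n mu n x (Y,Z,a,b) = (if condBn n mu Z then
   Some (YBn n mu Y Z a, ZBn n mu Z, a, b + alphaN n a b - 1/2) else None)"
  unfolding trB_n YBn_def ZBn_def condBn_def by simp

lemma trA_n': "trA n mu n x (Y,Z,a,b) = (if yN n x Y \<noteq> 0 then Some (Y, ZAn n x Y Z a b, a, b + alphaN n a b) else None)"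
  unfolding trA_n ZAn_def by simp

lemma yN_YB: assumes k: "k \<in> {1..n-1}"
  shows "yN n x (YB n mu k x Y Z a b) = - (Z k / mu k * (Z k * yN n x Y + alphaN n a b))"
proof -
  have "sum (YB n mu k x Y Z a b) {1..n-1} = YB n mu k x Y Z a b k + sum (YB n mu k x Y Z a b) ({1..n-1} - {k})"
    using k by (simp add: sum.remove)
  also have "sum (YB n mu k x Y Z a b) ({1..n-1} - {k}) = (\<Sum>i\<in>{1..n-1} - {k}. Yo mu k Y Z a i)"
    by (rule sum.cong) (auto simp: YB_def)
  finally show ?thesis unfolding yN_def[of n x "YB n mu k x Y Z a b"] by (simp add: YB_def)
qed

lemma condB_mu: "condB n mu k Z \<Longrightarrow> Z k \<noteq> 0 \<and> mu k \<noteq> 0"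
  "condB n mu k Z \<Longrightarrow> j \<in> {1..n-1} \<Longrightarrow> j \<noteq> k \<Longrightarrow> Z j \<noteq> Z k \<and> mu j \<noteq> mu k"
  unfolding condB_def by auto

lemma comm_AA: assumes "k \<noteq> n" "j \<noteq> n" "k \<noteq> j"
  "trA n mu k x s = Some t1" "trA n mu j x t1 = Some s1"
  "trA n mu j x s = Some t2" "trA n mu k x t2 = Some s2"
  shows "s1 = s2"
proof -
  obtain Y Z a b where s: "s = (Y,Z,a,b)" by (cases s) auto
  show ?thesis using assms unfolding s by (auto simp: trA_k fun_upd_twist split: if_splits)
qed

lemma comm_AkAn: assumes k: "k \<in> {1..n-1}"
  and "trA n mu k x s = Some t1" "trA n mu n x t1 = Some s1"
  "trA n mu n x s = Some t2" "trA n mu k x t2 = Some s2"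
  shows "s1 = s2"
proof -
  obtain Y Z a b where s: "s = (Y,Z,a,b)" by (cases s) auto
  have kn: "k \<noteq> n" using k by auto
  have c: "Y k \<noteq> 0" "yN n x Y \<noteq> 0" using assms(2,4) kn unfolding s by (auto simp: trA_k trA_n' split: if_splits)
  have t1: "t1 = (Y, Z(k := Z k - a k / Y k), a(k := - a k), b + a k)" using assms(2) c kn unfolding s by (simp add: trA_k)
  have t2: "t2 = (Y, ZAn n x Y Z a b, a, b + alphaN n a b)" using assms(4) c unfolding s by (simp add: trA_n')
  have s1: "s1 = (Y, ZAn n x Y (Z(k := Z k - a k / Y k)) (a(k := - a k)) (b + a k), a(k := - a k), b + a k + alphaN n a b)"
    using assms(3) c unfolding t1 by (simp add: trA_n' alphaN_Ak[OF k])
  have s2: "s2 = (Y, (ZAn n x Y Z a b)(k := ZAn n x Y Z a b k - a k / Y k), a(k := - a k), b + alphaN n a b + a k)"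
    using assms(5) c kn unfolding t2 by (simp add: trA_k)
  show ?thesis unfolding s1 s2 using k by (auto simp: ZAn_def alphaN_Ak intro!: ext)
qed


lemma Yo_Ak0: "(Yk::complex) \<noteq> 0 \<Longrightarrow> ((Zk - ak/Yk) - Zj)/E*(((Zk - ak/Yk) - Zj)*Yk - - ak) = (Zk - Zj)/E*((Zk-Zj)*Yk - ak)"
  by (cases "E = 0") (simp_all add: field_simps)

lemma Z_AkBj0: "(D::complex) \<noteq> 0 \<Longrightarrow> E \<noteq> 0 \<Longrightarrow> Y \<noteq> 0 \<Longrightarrow> D*Y - a \<noteq> 0 \<Longrightarrow>
   c - E/(D - a/Y) = c - E/D - a/(D/E*(D*Y-a))"
  by (simp add: field_simps)

lemma Yo_Ak: assumes "Y k \<noteq> 0" "i \<noteq> j" "j \<noteq> k"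
  shows "Yo mu j Y (Z(k := Z k - a k / Y k)) (a(k := - a k)) i = Yo mu j Y Z a i"
  using assms Yo_Ak0[of "Y k" "Z k" "a k" "Z j" "mu k - mu j"] by (auto simp: Yo_def)

lemma comm_AkBj: assumes k: "k \<in> {1..n-1}" and j: "j \<in> {1..n-1}" and jk: "j \<noteq> k"
  and "trA n mu k x s = Some t1" "trB n mu j x t1 = Some s1"
  "trB n mu j x s = Some t2" "trA n mu k x t2 = Some s2"
  shows "s1 = s2"
proof -
  obtain Y Z a b where s: "s = (Y,Z,a,b)" by (cases s) auto
  have kn: "k \<noteq> n" "j \<noteq> n" using k j by auto
  have c1: "Y k \<noteq> 0" using assms(4) kn unfolding s by (auto simp: trA_k split: if_splits)
  have t1: "t1 = (Y, Z(k := Z k - a k / Y k), a(k := - a k), b + a k)" using assms(4) c1 kn unfolding s by (simp add: trA_k)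
  have c2: "condB n mu j Z" using assms(6) kn unfolding s by (auto simp: trB_k' split: if_splits)
  have t2: "t2 = (YB n mu j x Y Z a b, ZB n mu j Z, a(j:=1-a j), b + a j - 1/2)" using assms(6) c2 kn unfolding s by (simp add: trB_k')
  have c3: "condB n mu j (Z(k := Z k - a k / Y k))" using assms(5) kn unfolding t1 by (auto simp: trB_k' split: if_splits)
  have s1: "s1 = (YB n mu j x Y (Z(k := Z k - a k / Y k)) (a(k := - a k)) (b + a k), ZB n mu j (Z(k := Z k - a k / Y k)),
     (a(k := - a k))(j:=1-(a(k := - a k)) j), b + a k + (a(k := - a k)) j - 1/2)"
    using assms(5) c3 kn unfolding t1 by (simp add: trB_k')
  have c4: "YB n mu j x Y Z a b k \<noteq> 0" using assms(7) kn unfolding t2 by (auto simp: trA_k split: if_splits)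
  have s2: "s2 = (YB n mu j x Y Z a b, (ZB n mu j Z)(k := ZB n mu j Z k - (a(j:=1-a j)) k / YB n mu j x Y Z a b k),
     (a(j:=1-a j))(k := - (a(j:=1-a j)) k), b + a j - 1/2 + (a(j:=1-a j)) k)"
    using assms(7) c4 kn unfolding t2 by (simp add: trA_k)
  have kI: "k \<in> {1..n-1} - {j}" using k jk by auto
  have Yeq: "YB n mu j x Y (Z(k := Z k - a k / Y k)) (a(k := - a k)) (b + a k) = YB n mu j x Y Z a b"
  proof -
    have "(\<Sum>i\<in>{1..n-1} - {j}. Yo mu j Y (Z(k := Z k - a k / Y k)) (a(k := - a k)) i) = (\<Sum>i\<in>{1..n-1} - {j}. Yo mu j Y Z a i)"
      by (rule sum.cong[OF refl]) (use Yo_Ak[of Y k, OF c1] jk in auto)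
    then show ?thesis unfolding YB_def using Yo_Ak[of Y k, OF c1] jk alphaN_Ak[OF k] by (auto intro!: ext)
  qed
  have cz: "Z j \<noteq> 0" "mu j \<noteq> 0" "Z k \<noteq> Z j" "mu k \<noteq> mu j"
    using condB_mu[OF c2] jk k by auto
  have cz2: "Z k - a k / Y k \<noteq> Z j" using condB_mu(2)[OF c3 k] jk by auto
  have ykk: "YB n mu j x Y Z a b k = Yo mu j Y Z a k" using kI by (simp add: YB_def)
  have dya: "(Z k - Z j) * Y k - a k \<noteq> 0" using c4 unfolding ykk Yo_def by auto
  have Zk: "mu j / Z j - (mu k - mu j) / (Z k - a k / Y k - Z j) = 
     mu j / Z j - (mu k - mu j) / (Z k - Z j) - a k / Yo mu j Y Z a k"
    using Z_AkBj0[where D="Z k - Z j" and E="mu k - mu j" and Y="Y k" and a="a k" and c="mu j / Z j"] cz c1 dya unfolding Yo_def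
    by (simp add: algebra_simps)
  have Zeq: "ZB n mu j (Z(k := Z k - a k / Y k)) = (ZB n mu j Z)(k := ZB n mu j Z k - (a(j:=1-a j)) k / YB n mu j x Y Z a b k)"
    unfolding ykk using kI jk Zk by (auto simp: ZB_def intro!: ext)
  show ?thesis unfolding s1 s2 Yeq Zeq using jk by (auto simp: fun_upd_twist)
qed


lemma AkBn_Y0: "(Y::complex) \<noteq> 0 \<Longrightarrow> (Z - a/Y)/m * ((Z - a/Y)*Y - - a) = Z/m*(Z*Y - a)"
  by (cases "m = 0") (simp_all add: field_simps)

lemma AkBn_Z0: "(Y::complex) \<noteq> 0 \<Longrightarrow> Z \<noteq> 0 \<Longrightarrow> m \<noteq> 0 \<Longrightarrow> Z*Y - a \<noteq> 0 \<Longrightarrow>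
   - m / (Z - a/Y) = - m / Z - a / (Z/m*(Z*Y - a))"
  by (simp add: field_simps)

lemma comm_AkBn: assumes k: "k \<in> {1..n-1}"
  and "trA n mu k x s = Some t1" "trB n mu n x t1 = Some s1"
  "trB n mu n x s = Some t2" "trA n mu k x t2 = Some s2"
  shows "s1 = s2"
proof -
  obtain Y Z a b where s: "s = (Y,Z,a,b)" by (cases s) auto
  have kn: "k \<noteq> n" using k by auto
  have c1: "Y k \<noteq> 0" using assms(2) kn unfolding s by (auto simp: trA_k split: if_splits)
  have t1: "t1 = (Y, Z(k := Z k - a k / Y k), a(k := - a k), b + a k)" using assms(2) c1 kn unfolding s by (simp add: trA_k)
  have c2: "condBn n mu Z" using assms(4) unfolding s by (auto simp: trB_n' split: if_splits)
  have t2: "t2 = (YBn n mu Y Z a, ZBn n mu Z, a, b + alphaN n a b - 1/2)" using assms(4) c2 unfolding s by (simp add: trB_n')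
  have c3: "condBn n mu (Z(k := Z k - a k / Y k))" using assms(3) unfolding t1 by (auto simp: trB_n' split: if_splits)
  have s1: "s1 = (YBn n mu Y (Z(k := Z k - a k / Y k)) (a(k := - a k)), ZBn n mu (Z(k := Z k - a k / Y k)),
     a(k := - a k), b + a k + alphaN n a b - 1/2)"
    using assms(3) c3 unfolding t1 by (simp add: trB_n' alphaN_Ak[OF k])
  have c4: "YBn n mu Y Z a k \<noteq> 0" using assms(5) kn unfolding t2 by (auto simp: trA_k split: if_splits)
  have s2: "s2 = (YBn n mu Y Z a, (ZBn n mu Z)(k := ZBn n mu Z k - a k / YBn n mu Y Z a k),
     a(k := - a k), b + alphaN n a b - 1/2 + a k)"
    using assms(5) c4 kn unfolding t2 by (simp add: trA_k)
  have cz: "Z k \<noteq> 0" "mu k \<noteq> 0" using c2 k unfolding condBn_def by auto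
  have dya: "Z k * Y k - a k \<noteq> 0" using c4 k by (auto simp: YBn_def)
  have Yeq: "YBn n mu Y (Z(k := Z k - a k / Y k)) (a(k := - a k)) = YBn n mu Y Z a"
    using AkBn_Y0[OF c1, of "Z k" "a k" "mu k"] by (auto simp: YBn_def intro!: ext)
  have Zeq: "ZBn n mu (Z(k := Z k - a k / Y k)) = (ZBn n mu Z)(k := ZBn n mu Z k - a k / YBn n mu Y Z a k)"
    using AkBn_Z0[OF c1 cz(1) cz(2) dya] k by (auto simp: ZBn_def YBn_def intro!: ext)
  show ?thesis unfolding s1 s2 Yeq Zeq by (simp add: algebra_simps)
qed


lemma AnBk_Y0: "(y::complex) \<noteq> 0 \<Longrightarrow> (Z + al/y)/m*((Z + al/y)*y + - al) = Z/m*(Z*y + al)"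
  by (cases "m = 0") (simp_all add: field_simps)

lemma AnBk_Z0: "(y::complex) \<noteq> 0 \<Longrightarrow> Z \<noteq> 0 \<Longrightarrow> m \<noteq> 0 \<Longrightarrow> Z + al/y \<noteq> 0 \<Longrightarrow> Z*y + al \<noteq> 0 \<Longrightarrow>
   m/(Z + al/y) = m/Z + al/(-(Z/m*(Z*y + al)))"
proof -
  assume h: "(y::complex) \<noteq> 0" "Z \<noteq> 0" "m \<noteq> 0" "Z + al/y \<noteq> 0" "Z*y + al \<noteq> 0"
  have "Z * al + Z * (Z * y) \<noteq> 0" using h by (metis add.commute mult_eq_0_iff ring_class.ring_distribs(1))
  then show ?thesis using h by (simp add: field_simps)
qed

lemma comm_AnBk: assumes k: "k \<in> {1..n-1}"
  and "trA n mu n x s = Some t1" "trB n mu k x t1 = Some s1"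
  "trB n mu k x s = Some t2" "trA n mu n x t2 = Some s2"
  shows "s1 = s2"
proof -
  obtain Y Z a b where s: "s = (Y,Z,a,b)" by (cases s) auto
  have kn: "k \<noteq> n" using k by auto
  have c1: "yN n x Y \<noteq> 0" using assms(2) unfolding s by (auto simp: trA_n' split: if_splits)
  have t1: "t1 = (Y, ZAn n x Y Z a b, a, b + alphaN n a b)" using assms(2) c1 unfolding s by (simp add: trA_n')
  have c2: "condB n mu k Z" using assms(4) kn unfolding s by (auto simp: trB_k' split: if_splits)
  have t2: "t2 = (YB n mu k x Y Z a b, ZB n mu k Z, a(k:=1-a k), b + a k - 1/2)" using assms(4) c2 kn unfolding s by (simp add: trB_k')
  have c3: "condB n mu k (ZAn n x Y Z a b)" using assms(3) kn unfolding t1 by (auto simp: trB_k' split: if_splits)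
  have s1: "s1 = (YB n mu k x Y (ZAn n x Y Z a b) a (b + alphaN n a b), ZB n mu k (ZAn n x Y Z a b),
     a(k:=1-a k), b + alphaN n a b + a k - 1/2)"
    using assms(3) c3 kn unfolding t1 by (simp add: trB_k')
  have c4: "yN n x (YB n mu k x Y Z a b) \<noteq> 0" using assms(5) unfolding t2 by (auto simp: trA_n' split: if_splits)
  have s2: "s2 = (YB n mu k x Y Z a b, ZAn n x (YB n mu k x Y Z a b) (ZB n mu k Z) (a(k:=1-a k)) (b + a k - 1/2),
     a(k:=1-a k), b + a k - 1/2 + alphaN n a b)"
    using assms(5) c4 unfolding t2 by (simp add: trA_n' alphaN_Bk[OF k])
  have cz: "Z k \<noteq> 0" "mu k \<noteq> 0" using condB_mu[OF c2] by auto
  have cz2: "Z k + alphaN n a b / yN n x Y \<noteq> 0" using condB_mu(1)[OF c3] k by (auto simp: ZAn_def)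
  have cw: "Z k * yN n x Y + alphaN n a b \<noteq> 0" using c4 cz unfolding yN_YB[OF k] by auto
  have Yoeq: "Yo mu k Y (ZAn n x Y Z a b) a i = Yo mu k Y Z a i" if "i \<in> {1..n-1}" for i
    using that k by (simp add: Yo_def ZAn_def)
  have Yeq: "YB n mu k x Y (ZAn n x Y Z a b) a (b + alphaN n a b) = YB n mu k x Y Z a b"
  proof -
    have "(\<Sum>i\<in>{1..n-1} - {k}. Yo mu k Y (ZAn n x Y Z a b) a i) = (\<Sum>i\<in>{1..n-1} - {k}. Yo mu k Y Z a i)"
      by (rule sum.cong[OF refl]) (use Yoeq in auto)
    then show ?thesis unfolding YB_def using Yoeq k AnBk_Y0[OF c1, of "Z k" "alphaN n a b" "mu k"]
      by (auto intro!: ext simp: alphaN_An ZAn_def)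
  qed
  have Zk: "mu k / (Z k + alphaN n a b / yN n x Y) = mu k / Z k + alphaN n a b / yN n x (YB n mu k x Y Z a b)"
    unfolding yN_YB[OF k] by (rule AnBk_Z0[OF c1 cz cz2 cw])
  have Zeq: "ZB n mu k (ZAn n x Y Z a b) = ZAn n x (YB n mu k x Y Z a b) (ZB n mu k Z) (a(k:=1-a k)) (b + a k - 1/2)"
    unfolding ZAn_def[of n x "YB n mu k x Y Z a b"] alphaN_Bk[OF k] 
    using k Zk by (auto simp: ZB_def ZAn_def intro!: ext)
  show ?thesis unfolding s1 s2 Yeq Zeq by (simp add: algebra_simps)
qed


lemma inv_eq: "(a::complex) * b = 1 \<Longrightarrow> inverse a = b" by (rule inverse_unique)
lemma ex_inv: "(a::complex) \<noteq> 0 \<Longrightarrow> \<exists>b. a * b = 1" by (metis right_inverse)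

lemma BkBn_Z0: "(Zk::complex) \<noteq> 0 \<Longrightarrow> m \<noteq> 0 \<Longrightarrow> Zi - Zk \<noteq> 0 \<Longrightarrow> Zi \<noteq> 0 \<Longrightarrow>
  m/Zk - (p-m)/(Zi-Zk) \<noteq> 0 \<Longrightarrow> (-p/Zi) - (-m/Zk) \<noteq> 0 \<Longrightarrow>
  - p / (m/Zk - (p-m)/(Zi-Zk)) = m/(-m/Zk) - (p - m)/((-p/Zi) - (-m/Zk))"
proof -
  assume h: "(Zk::complex) \<noteq> 0" "m \<noteq> 0" "Zi - Zk \<noteq> 0" "Zi \<noteq> 0"
    "m/Zk - (p-m)/(Zi-Zk) \<noteq> 0" "(-p/Zi) - (-m/Zk) \<noteq> 0"
  obtain i1 i2 i3 i4 where e: "Zk * i1 = 1" "m * i2 = 1" "(Zi - Zk) * i3 = 1" "Zi * i4 = 1"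
    using h ex_inv by metis
  have h5: "m * i1 - (p - m) * i3 \<noteq> 0" "-p * i4 - -m * i1 \<noteq> 0" "-m * i1 \<noteq> 0"
    using h(5,6) h(1,2) e unfolding divide_inverse inv_eq[OF e(1)] inv_eq[OF e(3)] inv_eq[OF e(4)] by auto
  obtain i5 i6 i7 where f: "(m * i1 - (p - m) * i3) * i5 = 1" "(-p * i4 - -m * i1) * i6 = 1" "(-m * i1) * i7 = 1"
    using h5 ex_inv by metis
  show ?thesis unfolding divide_inverse inv_eq[OF e(1)] inv_eq[OF e(2)] inv_eq[OF e(3)] inv_eq[OF e(4)]
    inv_eq[OF f(1)] inv_eq[OF f(2)] inv_eq[OF f(3)]
    using e f by algebra
qed

lemma BkBn_Y0: "(Zk::complex) \<noteq> 0 \<Longrightarrow> p \<noteq> 0 \<Longrightarrow> Zi - Zk \<noteq> 0 \<Longrightarrow> p - m \<noteq> 0 \<Longrightarrow> Zi \<noteq> 0 \<Longrightarrow>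
  (m/Zk - (p-m)/(Zi-Zk)) / p * ((m/Zk - (p-m)/(Zi-Zk)) * ((Zi - Zk) / (p - m) * ((Zi - Zk) * Yi - ai)) - ai)
  = ((-p/Zi) - (-m/Zk)) / (p - m) * (((-p/Zi) - (-m/Zk)) * (Zi / p * (Zi * Yi - ai)) - ai)"
proof -
  assume h: "(Zk::complex) \<noteq> 0" "p \<noteq> 0" "Zi - Zk \<noteq> 0" "p - m \<noteq> 0" "Zi \<noteq> 0"
  obtain i1 i2 i3 i4 i5 where e: "Zk * i1 = 1" "p * i2 = 1" "(Zi - Zk) * i3 = 1" "(p - m) * i4 = 1" "Zi * i5 = 1"
    using h ex_inv by metis
  show ?thesis unfolding divide_inverse inv_eq[OF e(1)] inv_eq[OF e(2)] inv_eq[OF e(3)] inv_eq[OF e(4)] inv_eq[OF e(5)]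
    using e by algebra
qed

lemma BkBn_P0: "(Zk::complex) \<noteq> 0 \<Longrightarrow> p \<noteq> 0 \<Longrightarrow> Zi - Zk \<noteq> 0 \<Longrightarrow> p - m \<noteq> 0 \<Longrightarrow> Zi \<noteq> 0 \<Longrightarrow>
  m / Zk^2 * ((Zi - Zk) / (p - m) * ((Zi - Zk) * Yi - ai)) + Yi
  = ((-p/Zi) - (-m/Zk)) / (p - m) * (((-p/Zi) - (-m/Zk)) * (Zi / p * (Zi * Yi - ai)) - ai) + m / Zk^2 * (Zi / p * (Zi * Yi - ai))"
proof -
  assume h: "(Zk::complex) \<noteq> 0" "p \<noteq> 0" "Zi - Zk \<noteq> 0" "p - m \<noteq> 0" "Zi \<noteq> 0"
  obtain i1 i2 i3 i4 i5 where e: "Zk * i1 = 1" "p * i2 = 1" "(Zi - Zk) * i3 = 1" "(p - m) * i4 = 1" "Zi * i5 = 1"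
    using h ex_inv by metis
  have e6: "inverse (Zk^2) = i1^2" using e(1) by (metis inv_eq power_mult_distrib power_one)
  show ?thesis unfolding divide_inverse inv_eq[OF e(1)] inv_eq[OF e(2)] inv_eq[OF e(3)] inv_eq[OF e(4)] inv_eq[OF e(5)] e6
    using e by algebra
qed


lemma BkBn_K0: assumes "(Zk::complex) \<noteq> 0" "m \<noteq> 0" "m / Zk^2 * S1 + SY = S2 + m / Zk^2 * SY2"
  shows "(m/Zk)/m * ((m/Zk) * (-x/2 - S1 + Zk/m*(Zk*(-x/2 - (Yk + SY)) + al)) - (1 - ak))
    = -x/2 - S2 + (-m/Zk)/m * ((-m/Zk) * (-x/2 - (Zk/m*(Zk*Yk - ak) + SY2)) + (1 - al))"
proof -
  obtain i1 i2 where e: "Zk * i1 = 1" "m * i2 = 1" using assms ex_inv by metis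
  have e6: "inverse (Zk^2) = i1^2" using e(1) by (metis inv_eq power_mult_distrib power_one)
  have r: "S2 = m / Zk^2 * S1 + SY - m / Zk^2 * SY2" using assms(3) by (simp add: algebra_simps)
  show ?thesis unfolding r divide_inverse inv_eq[OF e(1)] inv_eq[OF e(2)] e6
    using e by algebra
qed

lemma sum_split_k: "k \<in> {1..n-1} \<Longrightarrow> sum (f::nat\<Rightarrow>complex) {1..n-1} = f k + sum f ({1..n-1} - {k})"
  by (simp add: sum.remove)



lemma comm_BkBn: assumes k: "k \<in> {1..n-1}"
  and "trB n mu k x s = Some t1" "trB n mu n x t1 = Some s1"
  "trB n mu n x s = Some t2" "trB n mu k x t2 = Some s2"
  shows "s1 = s2"
proof -
  obtain Y Z a b where s: "s = (Y,Z,a,b)" by (cases s) auto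
  have kn: "k \<noteq> n" using k by auto
  have c1: "condB n mu k Z" using assms(2) kn unfolding s by (auto simp: trB_k' split: if_splits)
  have t1: "t1 = (YB n mu k x Y Z a b, ZB n mu k Z, a(k:=1-a k), b + a k - 1/2)" using assms(2) c1 kn unfolding s by (simp add: trB_k')
  have c2: "condBn n mu Z" using assms(4) unfolding s by (auto simp: trB_n' split: if_splits)
  have t2: "t2 = (YBn n mu Y Z a, ZBn n mu Z, a, b + alphaN n a b - 1/2)" using assms(4) c2 unfolding s by (simp add: trB_n')
  have c3: "condBn n mu (ZB n mu k Z)" using assms(3) unfolding t1 by (auto simp: trB_n' split: if_splits)
  have s1: "s1 = (YBn n mu (YB n mu k x Y Z a b) (ZB n mu k Z) (a(k:=1-a k)), ZBn n mu (ZB n mu k Z),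
     a(k:=1-a k), b + a k - 1/2 + alphaN n a b - 1/2)"
    using assms(3) c3 unfolding t1 by (simp add: trB_n' alphaN_Bk[OF k])
  have c4: "condB n mu k (ZBn n mu Z)" using assms(5) kn unfolding t2 by (auto simp: trB_k' split: if_splits)
  have s2: "s2 = (YB n mu k x (YBn n mu Y Z a) (ZBn n mu Z) a (b + alphaN n a b - 1/2), ZB n mu k (ZBn n mu Z),
     a(k:=1-a k), b + alphaN n a b - 1/2 + a k - 1/2)"
    using assms(5) c4 kn unfolding t2 by (simp add: trB_k')
  define K where "K = {1..n-1} - {k}"
  have cz: "Z k \<noteq> 0" "mu k \<noteq> 0" using condB_mu[OF c1] by auto
  have ci: "Z i \<noteq> 0" "mu i \<noteq> 0" "Z i - Z k \<noteq> 0" "mu i - mu k \<noteq> 0"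
     "mu k / Z k - (mu i - mu k) / (Z i - Z k) \<noteq> 0" "(- mu i / Z i) - (- mu k / Z k) \<noteq> 0"
    if i: "i \<in> K" for i
  proof -
    have iI: "i \<in> {1..n-1}" "i \<noteq> k" using i by (auto simp: K_def)
    show "Z i \<noteq> 0" "mu i \<noteq> 0" using c2 iI unfolding condBn_def by auto
    show "Z i - Z k \<noteq> 0" "mu i - mu k \<noteq> 0" using condB_mu(2)[OF c1 iI] by auto
    have "ZB n mu k Z i \<noteq> 0" using c3 iI unfolding condBn_def by auto
    then show "mu k / Z k - (mu i - mu k) / (Z i - Z k) \<noteq> 0" using iI by (simp add: ZB_def)
    show "(- mu i / Z i) - (- mu k / Z k) \<noteq> 0" using condB_mu(2)[OF c4 iI] iI k unfolding ZBn_def by auto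
  qed
  have Zeq: "ZBn n mu (ZB n mu k Z) = ZB n mu k (ZBn n mu Z)"
  proof
    fix i show "ZBn n mu (ZB n mu k Z) i = ZB n mu k (ZBn n mu Z) i"
    proof (cases "i \<in> K")
      case True
      then have "i \<in> {1..n-1}" "i \<noteq> k" by (auto simp: K_def)
      then have l: "ZBn n mu (ZB n mu k Z) i = - mu i / (mu k/Z k - (mu i-mu k)/(Z i-Z k))"
        and r: "ZB n mu k (ZBn n mu Z) i = mu k/(-mu k/Z k) - (mu i - mu k)/((-mu i/Z i) - (-mu k/Z k))"
        using k by (simp_all add: ZBn_def ZB_def)
      show ?thesis unfolding l r by (rule BkBn_Z0[OF cz(1) cz(2) ci(3,1,5,6)[OF True]])
    next
      case False
      show ?thesis
      proof (cases "i = k")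
        case True
        have "ZBn n mu (ZB n mu k Z) i = - mu k / (mu k / Z k)" using k True by (simp add: ZBn_def ZB_def)
        also have "\<dots> = mu k / (- mu k / Z k)" using cz by (simp add: field_simps)
        also have "\<dots> = ZB n mu k (ZBn n mu Z) i" using k True by (simp add: ZBn_def ZB_def)
        finally show ?thesis .
      next
        case False
        then have "i \<notin> {1..n-1}" using \<open>i \<notin> K\<close> by (auto simp: K_def)
        then show ?thesis using k False by (simp add: ZBn_def ZB_def del: atLeastAtMost_iff)
      qed
    qed
  qed
  have Yi: "YBn n mu (YB n mu k x Y Z a b) (ZB n mu k Z) (a(k:=1-a k)) i = YB n mu k x (YBn n mu Y Z a) (ZBn n mu Z) a (b + alphaN n a b - 1/2) i"
    if i: "i \<in> K" for i
  proof -
    have "i \<in> {1..n-1}" "i \<noteq> k" using i by (auto simp: K_def)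
    then have l: "YBn n mu (YB n mu k x Y Z a b) (ZB n mu k Z) (a(k:=1-a k)) i =
      (mu k/Z k - (mu i-mu k)/(Z i-Z k)) / mu i * ((mu k/Z k - (mu i-mu k)/(Z i-Z k)) * ((Z i - Z k) / (mu i - mu k) * ((Z i - Z k) * Y i - a i)) - a i)"
      and r: "YB n mu k x (YBn n mu Y Z a) (ZBn n mu Z) a (b + alphaN n a b - 1/2) i = 
      ((-mu i/Z i) - (-mu k/Z k)) / (mu i - mu k) * (((-mu i/Z i) - (-mu k/Z k)) * (Z i / mu i * (Z i * Y i - a i)) - a i)"
      using k by (simp_all add: YBn_def YB_def ZB_def ZBn_def Yo_def)
    show ?thesis unfolding l r by (rule BkBn_Y0[OF cz(1) ci(2,3,4,1)[OF i]])
  qed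
  have P: "mu k / (Z k)^2 * sum (Yo mu k Y Z a) K + sum Y K = sum (Yo mu k (YBn n mu Y Z a) (ZBn n mu Z) a) K + mu k / (Z k)^2 * sum (YBn n mu Y Z a) K"
  proof -
    have "(\<Sum>i\<in>K. mu k / (Z k)^2 * Yo mu k Y Z a i + Y i) = (\<Sum>i\<in>K. Yo mu k (YBn n mu Y Z a) (ZBn n mu Z) a i + mu k / (Z k)^2 * YBn n mu Y Z a i)"
    proof (rule sum.cong[OF refl])
      fix i assume i: "i \<in> K"
      then have "i \<in> {1..n-1}" "i \<noteq> k" by (auto simp: K_def)
      then have l: "Yo mu k Y Z a i = (Z i - Z k) / (mu i - mu k) * ((Z i - Z k) * Y i - a i)"
        and r: "Yo mu k (YBn n mu Y Z a) (ZBn n mu Z) a i = ((-mu i/Z i) - (-mu k/Z k)) / (mu i - mu k) * (((-mu i/Z i) - (-mu k/Z k)) * (Z i / mu i * (Z i * Y i - a i)) - a i)"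
        and r2: "YBn n mu Y Z a i = Z i / mu i * (Z i * Y i - a i)"
        using k by (simp_all add: YBn_def ZBn_def Yo_def)
      show "mu k / (Z k)^2 * Yo mu k Y Z a i + Y i = Yo mu k (YBn n mu Y Z a) (ZBn n mu Z) a i + mu k / (Z k)^2 * YBn n mu Y Z a i"
        unfolding l r r2 by (rule BkBn_P0[OF cz(1) ci(2,3,4,1)[OF i]])
    qed
    then show ?thesis by (simp add: sum.distrib sum_distrib_left)
  qed
  have Yk: "YBn n mu (YB n mu k x Y Z a b) (ZB n mu k Z) (a(k:=1-a k)) k = YB n mu k x (YBn n mu Y Z a) (ZBn n mu Z) a (b + alphaN n a b - 1/2) k"
  proof -
    have l: "YBn n mu (YB n mu k x Y Z a b) (ZB n mu k Z) (a(k:=1-a k)) k =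
      (mu k / Z k)/mu k * ((mu k / Z k) * (-x/2 - sum (Yo mu k Y Z a) K + Z k/mu k*(Z k*(-x/2 - (Y k + sum Y K)) + alphaN n a b)) - (1 - a k))"
      using k unfolding YBn_def YB_def ZB_def K_def yN_def sum_split_k[OF k, of Y] by simp
    have r: "YB n mu k x (YBn n mu Y Z a) (ZBn n mu Z) a (b + alphaN n a b - 1/2) k =
      -x/2 - sum (Yo mu k (YBn n mu Y Z a) (ZBn n mu Z) a) K + (- mu k / Z k)/mu k * ((- mu k / Z k) * (-x/2 - (Z k / mu k * (Z k * Y k - a k) + sum (YBn n mu Y Z a) K)) + (1 - alphaN n a b))"
      using k unfolding YB_def ZBn_def K_def yN_def sum_split_k[OF k, of "YBn n mu Y Z a"] alphaN_Bn
      by (simp add: YBn_def)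
    show ?thesis unfolding l r by (rule BkBn_K0[OF cz P])
  qed
  have Yeq: "YBn n mu (YB n mu k x Y Z a b) (ZB n mu k Z) (a(k:=1-a k)) = YB n mu k x (YBn n mu Y Z a) (ZBn n mu Z) a (b + alphaN n a b - 1/2)"
  proof
    fix i show "YBn n mu (YB n mu k x Y Z a b) (ZB n mu k Z) (a(k:=1-a k)) i = YB n mu k x (YBn n mu Y Z a) (ZBn n mu Z) a (b + alphaN n a b - 1/2) i"
    proof (cases "i \<in> K")
      case True then show ?thesis by (rule Yi)
    next
      case False
      show ?thesis
      proof (cases "i = k")
        case True then show ?thesis using Yk by simp
      next
        case False
        then show ?thesis using \<open>i \<notin> K\<close> k by (auto simp: YBn_def YB_def K_def)
      qed
    qed
  qed
  show ?thesis unfolding s1 s2 Yeq Zeq by (simp add: algebra_simps)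
qed



lemma BB_ZL: assumes h: "(Zk::complex) \<noteq> 0" "Zj \<noteq> 0" "Zi - Zk \<noteq> 0" "Zj - Zk \<noteq> 0" "Zi - Zj \<noteq> 0" "Zk - Zj \<noteq> 0"
  "mk/Zk - (mj-mk)/(Zj-Zk) \<noteq> 0"
  "(mk/Zk - (mi-mk)/(Zi-Zk)) - (mk/Zk - (mj-mk)/(Zj-Zk)) \<noteq> 0"
  "mj/Zj - (mk-mj)/(Zk-Zj) \<noteq> 0"
  "(mj/Zj - (mi-mj)/(Zi-Zj)) - (mj/Zj - (mk-mj)/(Zk-Zj)) \<noteq> 0"
  shows "mj/(mk/Zk - (mj-mk)/(Zj-Zk)) - (mi - mj)/((mk/Zk - (mi-mk)/(Zi-Zk)) - (mk/Zk - (mj-mk)/(Zj-Zk)))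
       = mk/(mj/Zj - (mk-mj)/(Zk-Zj)) - (mi - mk)/((mj/Zj - (mi-mj)/(Zi-Zj)) - (mj/Zj - (mk-mj)/(Zk-Zj)))"
proof -
  obtain i1 i2 i3 i4 i5 i6 where e: "Zk * i1 = 1" "Zj * i2 = 1" "(Zi - Zk) * i3 = 1" "(Zj - Zk) * i4 = 1"
    "(Zi - Zj) * i5 = 1" "(Zk - Zj) * i6 = 1"
    using h ex_inv by metis
  note E = inv_eq[OF e(1)] inv_eq[OF e(2)] inv_eq[OF e(3)] inv_eq[OF e(4)] inv_eq[OF e(5)] inv_eq[OF e(6)]
  have h2: "mk*i1 - (mj-mk)*i4 \<noteq> 0" "(mk*i1 - (mi-mk)*i3) - (mk*i1 - (mj-mk)*i4) \<noteq> 0"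
    "mj*i2 - (mk-mj)*i6 \<noteq> 0" "(mj*i2 - (mi-mj)*i5) - (mj*i2 - (mk-mj)*i6) \<noteq> 0"
    using h(7-10) unfolding divide_inverse E by auto
  obtain j1 j2 j3 j4 where f: "(mk*i1 - (mj-mk)*i4) * j1 = 1" "((mk*i1 - (mi-mk)*i3) - (mk*i1 - (mj-mk)*i4)) * j2 = 1"
    "(mj*i2 - (mk-mj)*i6) * j3 = 1" "((mj*i2 - (mi-mj)*i5) - (mj*i2 - (mk-mj)*i6)) * j4 = 1"
    using h2 ex_inv by metis
  show ?thesis unfolding divide_inverse E inv_eq[OF f(1)] inv_eq[OF f(2)] inv_eq[OF f(3)] inv_eq[OF f(4)]
    using e f by algebra
qed


lemma BB_Zk: assumes h: "(Zk::complex) \<noteq> 0" "Zj \<noteq> 0" "Zj - Zk \<noteq> 0" "Zk - Zj \<noteq> 0"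
  "mk/Zk - (mj-mk)/(Zj-Zk) \<noteq> 0"
  "mk/Zk - (mk/Zk - (mj-mk)/(Zj-Zk)) \<noteq> 0"
  "mj/Zj - (mk-mj)/(Zk-Zj) \<noteq> 0"
  shows "mj/(mk/Zk - (mj-mk)/(Zj-Zk)) - (mk - mj)/(mk/Zk - (mk/Zk - (mj-mk)/(Zj-Zk)))
       = mk/(mj/Zj - (mk-mj)/(Zk-Zj))"
proof -
  obtain i1 i2 i4 i6 where e: "Zk * i1 = 1" "Zj * i2 = 1" "(Zj - Zk) * i4 = 1" "(Zk - Zj) * i6 = 1"
    using h ex_inv by metis
  note E = inv_eq[OF e(1)] inv_eq[OF e(2)] inv_eq[OF e(3)] inv_eq[OF e(4)]
  have h2: "mk*i1 - (mj-mk)*i4 \<noteq> 0" "mk*i1 - (mk*i1 - (mj-mk)*i4) \<noteq> 0"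
    "mj*i2 - (mk-mj)*i6 \<noteq> 0"
    using h(5-7) unfolding divide_inverse E by auto
  obtain j1 j2 j3 where f: "(mk*i1 - (mj-mk)*i4) * j1 = 1" "(mk*i1 - (mk*i1 - (mj-mk)*i4)) * j2 = 1"
    "(mj*i2 - (mk-mj)*i6) * j3 = 1"
    using h2 ex_inv by metis
  show ?thesis unfolding divide_inverse E inv_eq[OF f(1)] inv_eq[OF f(2)] inv_eq[OF f(3)]
    using e f by algebra
qed

lemma BB_YL: assumes h: "(Zk::complex) \<noteq> 0" "Zj \<noteq> 0" "Zi - Zk \<noteq> 0" "Zj - Zk \<noteq> 0" "Zi - Zj \<noteq> 0" "Zk - Zj \<noteq> 0"
  "mi - mk \<noteq> 0" "mi - mj \<noteq> 0"
  shows "((mk/Zk - (mi-mk)/(Zi-Zk)) - (mk/Zk - (mj-mk)/(Zj-Zk))) / (mi - mj) *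
     (((mk/Zk - (mi-mk)/(Zi-Zk)) - (mk/Zk - (mj-mk)/(Zj-Zk))) * ((Zi - Zk)/(mi-mk)*((Zi-Zk)*Yi - ai)) - ai)
   = ((mj/Zj - (mi-mj)/(Zi-Zj)) - (mj/Zj - (mk-mj)/(Zk-Zj))) / (mi - mk) *
     (((mj/Zj - (mi-mj)/(Zi-Zj)) - (mj/Zj - (mk-mj)/(Zk-Zj))) * ((Zi - Zj)/(mi-mj)*((Zi-Zj)*Yi - ai)) - ai)"
proof -
  obtain i1 i2 i3 i4 i5 i6 i7 i8 where e: "Zk * i1 = 1" "Zj * i2 = 1" "(Zi - Zk) * i3 = 1" "(Zj - Zk) * i4 = 1"
    "(Zi - Zj) * i5 = 1" "(Zk - Zj) * i6 = 1" "(mi - mk) * i7 = 1" "(mi - mj) * i8 = 1"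
    using h ex_inv by metis
  note E = inv_eq[OF e(1)] inv_eq[OF e(2)] inv_eq[OF e(3)] inv_eq[OF e(4)] inv_eq[OF e(5)] inv_eq[OF e(6)]
    inv_eq[OF e(7)] inv_eq[OF e(8)]
  show ?thesis unfolding divide_inverse E using e by algebra
qed


lemma BB_P: fixes Zk :: complex
  assumes h: "Zk \<noteq> 0" "Zj \<noteq> 0" "mk \<noteq> 0" "mj \<noteq> 0" "Zi - Zk \<noteq> 0" "Zj - Zk \<noteq> 0" "Zi - Zj \<noteq> 0" "Zk - Zj \<noteq> 0"
  "mi - mk \<noteq> 0" "mi - mj \<noteq> 0" "mk - mj \<noteq> 0" "mj - mk \<noteq> 0"
  and d: "Z1j = mk/Zk - (mj-mk)/(Zj-Zk)" "Z2k = mj/Zj - (mk-mj)/(Zk-Zj)" "Z2i = mj/Zj - (mi-mj)/(Zi-Zj)"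
    "L1 = (mk/Zk - Z1j)^2/(mk - mj)" "C1 = L1*Zk^2/mk" "L2 = (mj/Zj - Z2k)^2/(mj - mk)"
    "C2 = L2*Zj^2/mj + Z2k^2*Zj^2/(mk*mj)"
    "Yoki = (Zi-Zk)/(mi-mk)*((Zi-Zk)*Yi - ai)" "Yoji = (Zi-Zj)/(mi-mj)*((Zi-Zj)*Yi-ai)"
  shows "- L1 * Yoki - C1 * Yi = - ((Z2i - Z2k)/(mi - mk) * ((Z2i - Z2k)*Yoji - ai)) + L2 * Yoji + C2 * Yi"
proof -
  obtain i1 i2 i3 i4 i5 i6 i7 i8 i9 i10 i11 i12 where e: "Zk * i1 = 1" "Zj * i2 = 1" "(Zi - Zk) * i3 = 1" "(Zj - Zk) * i4 = 1"
    "(Zi - Zj) * i5 = 1" "(Zk - Zj) * i6 = 1" "(mi - mk) * i7 = 1" "(mi - mj) * i8 = 1"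
    "mk * i9 = 1" "mj * i10 = 1" "(mk - mj) * i11 = 1" "(mj - mk) * i12 = 1"
    using h ex_inv by metis
  have e2: "inverse (Zk^2) = i1^2" "inverse (Zj^2) = i2^2" "inverse (mk * mj) = i9 * i10"
    using e by (metis inv_eq power_mult_distrib power_one, metis inv_eq power_mult_distrib power_one,
        metis inv_eq mult.assoc mult.commute mult_1)
  note E = inv_eq[OF e(1)] inv_eq[OF e(2)] inv_eq[OF e(3)] inv_eq[OF e(4)] inv_eq[OF e(5)] inv_eq[OF e(6)]
    inv_eq[OF e(7)] inv_eq[OF e(8)] inv_eq[OF e(9)] inv_eq[OF e(10)] inv_eq[OF e(11)] inv_eq[OF e(12)]
  show ?thesis unfolding d(4-9) unfolding d(1-3) divide_inverse E e2 using e by algebra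
qed

lemma BB_K0: fixes Zk :: complex
  assumes h: "Zk \<noteq> 0" "Zj \<noteq> 0" "mk \<noteq> 0" "mj \<noteq> 0" "Zj - Zk \<noteq> 0" "Zk - Zj \<noteq> 0"
  "mk - mj \<noteq> 0" "mj - mk \<noteq> 0"
  and d: "Z1j = mk/Zk - (mj-mk)/(Zj-Zk)" "Z2k = mj/Zj - (mk-mj)/(Zk-Zj)"
    "L1 = (mk/Zk - Z1j)^2/(mk - mj)" "C1 = L1*Zk^2/mk" "L2 = (mj/Zj - Z2k)^2/(mj - mk)"
    "C2 = L2*Zj^2/mj + Z2k^2*Zj^2/(mk*mj)"
    "yn = -x/2 - (Yk + (Yj + SY))"
    "Yokj = (Zj-Zk)/(mj-mk)*((Zj-Zk)*Yj - aj)" "Yojk = (Zk-Zj)/(mk-mj)*((Zk-Zj)*Yk-ak)"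
  and R: "- L1 * S1 - C1 * SY = - S3 + L2 * S2 + C2 * SY"
  shows "(mk/Zk - Z1j)/(mk-mj) * ((mk/Zk - Z1j)*(-x/2 - (Yokj + S1) + Zk/mk*(Zk*yn + al)) - (1 - ak))
    = -x/2 - ((mj/Zj - Z2k)/(mj-mk)*((mj/Zj-Z2k)*(-x/2-(Yojk+S2)+Zj/mj*(Zj*yn+al))-(1-aj)) + S3)
      + Z2k/mk*(Z2k*(-(Zj/mj*(Zj*yn+al))) + al)"
proof -
  have S3: "S3 = L1 * S1 + C1 * SY + L2 * S2 + C2 * SY" using R by (simp add: algebra_simps)
  obtain i1 i2 i4 i6 i9 i10 i11 i12 where e: "Zk * i1 = 1" "Zj * i2 = 1" "(Zj - Zk) * i4 = 1"
    "(Zk - Zj) * i6 = 1" "mk * i9 = 1" "mj * i10 = 1" "(mk - mj) * i11 = 1" "(mj - mk) * i12 = 1"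
    using h ex_inv by metis
  have e2: "inverse (Zk^2) = i1^2" "inverse (Zj^2) = i2^2" "inverse (mk * mj) = i9 * i10"
    using e by (metis inv_eq power_mult_distrib power_one, metis inv_eq power_mult_distrib power_one,
        metis inv_eq mult.assoc mult.commute mult_1)
  note E = inv_eq[OF e(1)] inv_eq[OF e(2)] inv_eq[OF e(3)] inv_eq[OF e(4)] inv_eq[OF e(5)] inv_eq[OF e(6)]
    inv_eq[OF e(7)] inv_eq[OF e(8)]
  have two: "inverse (2::complex) * 2 = 1" by simp
  show ?thesis unfolding S3 unfolding d(3-9) unfolding d(1,2) divide_inverse E e2 using e two by algebra
qed



lemma BB_comp: assumes k: "k \<in> {1..n-1}" and j: "j \<in> {1..n-1}" and jk: "j \<noteq> k"
  and c1: "condB n mu k Z" and c2: "condB n mu j Z"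
  shows "YB n mu j x (YB n mu k x Y Z a b) (ZB n mu k Z) (a(k:=1-a k)) (b + a k - 1/2) k
       = YB n mu k x (YB n mu j x Y Z a b) (ZB n mu j Z) (a(j:=1-a j)) (b + a j - 1/2) k"
proof -
  define L where "L = {1..n-1} - {j,k}"
  have LI: "L \<subseteq> {1..n-1}" "j \<notin> L" "k \<notin> L" by (auto simp: L_def)
  have sK: "sum f ({1..n-1} - {k}) = f j + sum f L" for f :: "nat \<Rightarrow> complex"
  proof -
    have "j \<in> {1..n-1} - {k}" using j jk by auto
    then have "sum f ({1..n-1} - {k}) = f j + sum f ({1..n-1} - {k} - {j})" by (simp add: sum.remove)
    also have "{1..n-1} - {k} - {j} = L" by (auto simp: L_def)
    finally show ?thesis .
  qed
  have sJ: "sum f ({1..n-1} - {j}) = f k + sum f L" for f :: "nat \<Rightarrow> complex"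
  proof -
    have "k \<in> {1..n-1} - {j}" using k jk by auto
    then have "sum f ({1..n-1} - {j}) = f k + sum f ({1..n-1} - {j} - {k})" by (simp add: sum.remove)
    also have "{1..n-1} - {j} - {k} = L" by (auto simp: L_def)
    finally show ?thesis .
  qed
  have sI: "sum f {1..n-1} = f k + (f j + sum f L)" for f :: "nat \<Rightarrow> complex"
    using sum_split_k[OF k, of f] sK[of f] by simp
  have czk: "Z k \<noteq> 0" "mu k \<noteq> 0" using condB_mu(1)[OF c1] by auto
  have czj: "Z j \<noteq> 0" "mu j \<noteq> 0" using condB_mu(1)[OF c2] by auto
  have cjk: "Z j - Z k \<noteq> 0" "Z k - Z j \<noteq> 0" "mu k - mu j \<noteq> 0" "mu j - mu k \<noteq> 0"
    using condB_mu(2)[OF c1 j jk] by auto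
  have ci: "Z i - Z k \<noteq> 0" "Z i - Z j \<noteq> 0" "mu i - mu k \<noteq> 0" "mu i - mu j \<noteq> 0" if "i \<in> L" for i
  proof -
    have "i \<in> {1..n-1}" "i \<noteq> k" "i \<noteq> j" using that by (auto simp: L_def)
    then show "Z i - Z k \<noteq> 0" "Z i - Z j \<noteq> 0" "mu i - mu k \<noteq> 0" "mu i - mu j \<noteq> 0"
      using condB_mu(2)[OF c1, of i] condB_mu(2)[OF c2, of i] by auto
  qed
  define Z1j where "Z1j = mu k/Z k - (mu j-mu k)/(Z j-Z k)"
  define Z2k where "Z2k = mu j/Z j - (mu k-mu j)/(Z k-Z j)"
  define L1 where "L1 = (mu k/Z k - Z1j)^2/(mu k - mu j)"
  define C1 where "C1 = L1*(Z k)^2/mu k"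
  define L2 where "L2 = (mu j/Z j - Z2k)^2/(mu j - mu k)"
  define C2 where "C2 = L2*(Z j)^2/mu j + Z2k^2*(Z j)^2/(mu k*mu j)"
  define SY where "SY = sum Y L"
  define S1 where "S1 = sum (Yo mu k Y Z a) L"
  define S2 where "S2 = sum (Yo mu j Y Z a) L"
  define S3 where "S3 = sum (Yo mu k (YB n mu j x Y Z a b) (ZB n mu j Z) a) L"
  define yn where "yn = -x/2 - (Y k + (Y j + SY))"
  define Yokj where "Yokj = (Z j - Z k)/(mu j - mu k)*((Z j - Z k)*Y j - a j)"
  define Yojk where "Yojk = (Z k - Z j)/(mu k - mu j)*((Z k - Z j)*Y k - a k)"
  define al where "al = alphaN n a b"
  have ynd: "yN n x Y = yn" unfolding yN_def yn_def SY_def sI ..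
  have R: "- L1 * S1 - C1 * SY = - S3 + L2 * S2 + C2 * SY"
  proof -
    have "(\<Sum>i\<in>L. - L1 * Yo mu k Y Z a i - C1 * Y i) =
      (\<Sum>i\<in>L. - Yo mu k (YB n mu j x Y Z a b) (ZB n mu j Z) a i + L2 * Yo mu j Y Z a i + C2 * Y i)"
    proof (rule sum.cong[OF refl])
      fix i assume i: "i \<in> L"
      then have iI: "i \<in> {1..n-1} - {j}" "i \<noteq> k" by (auto simp: L_def)
      have e: "Yo mu k (YB n mu j x Y Z a b) (ZB n mu j Z) a i =
        ((mu j/Z j - (mu i-mu j)/(Z i-Z j)) - Z2k)/(mu i - mu k) * (((mu j/Z j - (mu i-mu j)/(Z i-Z j)) - Z2k)*Yo mu j Y Z a i - a i)"
        using iI k jk unfolding Yo_def[of mu k] Z2k_def by (simp add: YB_def ZB_def)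
      show "- L1 * Yo mu k Y Z a i - C1 * Y i = - Yo mu k (YB n mu j x Y Z a b) (ZB n mu j Z) a i + L2 * Yo mu j Y Z a i + C2 * Y i"
        unfolding e
        by (rule BB_P[OF czk(1) czj(1) czk(2) czj(2) ci(1) cjk(1) ci(2) cjk(2) ci(3) ci(4) cjk(3) cjk(4),
              OF i i i i Z1j_def Z2k_def refl L1_def C1_def L2_def C2_def Yo_def Yo_def])
    qed
    then show ?thesis unfolding S1_def S2_def S3_def SY_def
      by (simp add: sum.distrib sum_subtractf sum_distrib_left sum_negf)
  qed
  have lhs: "YB n mu j x (YB n mu k x Y Z a b) (ZB n mu k Z) (a(k:=1-a k)) (b + a k - 1/2) k
     = (mu k/Z k - Z1j)/(mu k-mu j) * ((mu k/Z k - Z1j)*(-x/2 - (Yokj + S1) + Z k/mu k*(Z k*yn + al)) - (1 - a k))"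
  proof -
    have "YB n mu k x Y Z a b k = -x/2 - (Yokj + S1) + Z k/mu k*(Z k*yn + al)"
      unfolding YB_def sK ynd al_def S1_def Yokj_def by (simp add: Yo_def)
    moreover have "ZB n mu k Z k = mu k / Z k" "ZB n mu k Z j = Z1j" using j jk by (simp_all add: ZB_def Z1j_def)
    ultimately show ?thesis using k jk by (simp add: YB_def Yo_def)
  qed
  have rhs: "YB n mu k x (YB n mu j x Y Z a b) (ZB n mu j Z) (a(j:=1-a j)) (b + a j - 1/2) k
     = -x/2 - ((mu j/Z j - Z2k)/(mu j-mu k)*((mu j/Z j-Z2k)*(-x/2-(Yojk+S2)+Z j/mu j*(Z j*yn+al))-(1-a j)) + S3)
      + Z2k/mu k*(Z2k*(-(Z j/mu j*(Z j*yn+al))) + al)"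
  proof -
    have y2j: "YB n mu j x Y Z a b j = -x/2-(Yojk+S2)+Z j/mu j*(Z j*yn+al)"
      unfolding YB_def sJ ynd al_def S2_def Yojk_def by (simp add: Yo_def)
    have z2: "ZB n mu j Z k = Z2k" "ZB n mu j Z j = mu j / Z j" using k jk by (simp_all add: ZB_def Z2k_def)
    have t: "Yo mu k (YB n mu j x Y Z a b) (ZB n mu j Z) (a(j:=1-a j)) j
      = (mu j/Z j - Z2k)/(mu j-mu k)*((mu j/Z j-Z2k)*(-x/2-(Yojk+S2)+Z j/mu j*(Z j*yn+al))-(1-a j))"
      unfolding Yo_def y2j z2 by simp
    have s3: "sum (Yo mu k (YB n mu j x Y Z a b) (ZB n mu j Z) (a(j:=1-a j))) L = S3"
      unfolding S3_def by (rule sum.cong[OF refl]) (use LI in \<open>auto simp: Yo_def\<close>)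
    have yn2: "yN n x (YB n mu j x Y Z a b) = -(Z j/mu j*(Z j*yn+al))"
      unfolding yN_YB[OF j] ynd al_def ..
    show ?thesis using k jk
      unfolding YB_def[of n mu k x "YB n mu j x Y Z a b"] sK t s3 yn2 alphaN_Bk[OF j] z2 al_def
      by simp
  qed
  show ?thesis unfolding lhs rhs
    by (rule BB_K0[OF czk(1) czj(1) czk(2) czj(2) cjk(1) cjk(2) cjk(3) cjk(4) Z1j_def Z2k_def L1_def C1_def
         L2_def C2_def yn_def Yokj_def Yojk_def R])
qed


lemma comm_BkBj: assumes k: "k \<in> {1..n-1}" and j: "j \<in> {1..n-1}" and jk: "j \<noteq> k"
  and "trB n mu k x s = Some t1" "trB n mu j x t1 = Some s1"
  "trB n mu j x s = Some t2" "trB n mu k x t2 = Some s2"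
  shows "s1 = s2"
proof -
  obtain Y Z a b where s: "s = (Y,Z,a,b)" by (cases s) auto
  have kn: "k \<noteq> n" "j \<noteq> n" using k j by auto
  have c1: "condB n mu k Z" using assms(4) kn unfolding s by (auto simp: trB_k' split: if_splits)
  have t1: "t1 = (YB n mu k x Y Z a b, ZB n mu k Z, a(k:=1-a k), b + a k - 1/2)" using assms(4) c1 kn unfolding s by (simp add: trB_k')
  have c2: "condB n mu j Z" using assms(6) kn unfolding s by (auto simp: trB_k' split: if_splits)
  have t2: "t2 = (YB n mu j x Y Z a b, ZB n mu j Z, a(j:=1-a j), b + a j - 1/2)" using assms(6) c2 kn unfolding s by (simp add: trB_k')
  have c3: "condB n mu j (ZB n mu k Z)" using assms(5) kn unfolding t1 by (auto simp: trB_k' split: if_splits)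
  have c4: "condB n mu k (ZB n mu j Z)" using assms(7) kn unfolding t2 by (auto simp: trB_k' split: if_splits)
  have s1: "s1 = (YB n mu j x (YB n mu k x Y Z a b) (ZB n mu k Z) (a(k:=1-a k)) (b + a k - 1/2), ZB n mu j (ZB n mu k Z),
     (a(k:=1-a k))(j:=1-(a(k:=1-a k)) j), b + a k - 1/2 + (a(k:=1-a k)) j - 1/2)"
    using assms(5) c3 kn unfolding t1 by (simp add: trB_k')
  have s2: "s2 = (YB n mu k x (YB n mu j x Y Z a b) (ZB n mu j Z) (a(j:=1-a j)) (b + a j - 1/2), ZB n mu k (ZB n mu j Z),
     (a(j:=1-a j))(k:=1-(a(j:=1-a j)) k), b + a j - 1/2 + (a(j:=1-a j)) k - 1/2)"
    using assms(7) c4 kn unfolding t2 by (simp add: trB_k')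
  define L where "L = {1..n-1} - {j,k}"
  have czk: "Z k \<noteq> 0" "mu k \<noteq> 0" using condB_mu(1)[OF c1] by auto
  have czj: "Z j \<noteq> 0" "mu j \<noteq> 0" using condB_mu(1)[OF c2] by auto
  have cjk: "Z j - Z k \<noteq> 0" "Z k - Z j \<noteq> 0" "mu k - mu j \<noteq> 0" "mu j - mu k \<noteq> 0"
    using condB_mu(2)[OF c1 j jk] by auto
  have ci: "Z i - Z k \<noteq> 0" "Z i - Z j \<noteq> 0" "mu i - mu k \<noteq> 0" "mu i - mu j \<noteq> 0" if "i \<in> L" for i
  proof -
    have "i \<in> {1..n-1}" "i \<noteq> k" "i \<noteq> j" using that by (auto simp: L_def)
    then show "Z i - Z k \<noteq> 0" "Z i - Z j \<noteq> 0" "mu i - mu k \<noteq> 0" "mu i - mu j \<noteq> 0"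
      using condB_mu(2)[OF c1, of i] condB_mu(2)[OF c2, of i] by auto
  qed
  have z1: "ZB n mu k Z k = mu k / Z k" "ZB n mu k Z j = mu k/Z k - (mu j-mu k)/(Z j-Z k)"
    "\<And>i. i \<in> L \<Longrightarrow> ZB n mu k Z i = mu k/Z k - (mu i-mu k)/(Z i-Z k)"
    using j jk by (auto simp: ZB_def L_def)
  have z2: "ZB n mu j Z j = mu j / Z j" "ZB n mu j Z k = mu j/Z j - (mu k-mu j)/(Z k-Z j)"
    "\<And>i. i \<in> L \<Longrightarrow> ZB n mu j Z i = mu j/Z j - (mu i-mu j)/(Z i-Z j)"
    using k jk by (auto simp: ZB_def L_def)
  have A1: "mu k/Z k - (mu j-mu k)/(Z j-Z k) \<noteq> 0" "mu k/Z k - (mu k/Z k - (mu j-mu k)/(Z j-Z k)) \<noteq> 0"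
    using condB_mu(1)[OF c3] condB_mu(2)[OF c3 k jk[symmetric]] unfolding z1 by auto
  have A2: "mu j/Z j - (mu k-mu j)/(Z k-Z j) \<noteq> 0" "mu j/Z j - (mu j/Z j - (mu k-mu j)/(Z k-Z j)) \<noteq> 0"
    using condB_mu(1)[OF c4] condB_mu(2)[OF c4 j jk] unfolding z2 by auto
  have Ai: "(mu k/Z k - (mu i-mu k)/(Z i-Z k)) - (mu k/Z k - (mu j-mu k)/(Z j-Z k)) \<noteq> 0"
     "(mu j/Z j - (mu i-mu j)/(Z i-Z j)) - (mu j/Z j - (mu k-mu j)/(Z k-Z j)) \<noteq> 0" if i: "i \<in> L" for i
  proof -
    have "i \<in> {1..n-1}" "i \<noteq> k" "i \<noteq> j" using i by (auto simp: L_def)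
    then show "(mu k/Z k - (mu i-mu k)/(Z i-Z k)) - (mu k/Z k - (mu j-mu k)/(Z j-Z k)) \<noteq> 0"
     "(mu j/Z j - (mu i-mu j)/(Z i-Z j)) - (mu j/Z j - (mu k-mu j)/(Z k-Z j)) \<noteq> 0"
      using condB_mu(2)[OF c3, of i] condB_mu(2)[OF c4, of i] unfolding z1(1,2) z2(1,2) z1(3)[OF i] z2(3)[OF i] by auto
  qed
  have Zeq: "ZB n mu j (ZB n mu k Z) = ZB n mu k (ZB n mu j Z)"
  proof
    fix i
    consider "i \<in> L" | "i = k" | "i = j" | "i \<notin> {1..n-1}" by (auto simp: L_def)
    then show "ZB n mu j (ZB n mu k Z) i = ZB n mu k (ZB n mu j Z) i"
    proof cases
      case 1
      then have iI: "i \<in> {1..n-1} - {j}" "i \<in> {1..n-1} - {k}" by (auto simp: L_def)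
      have l: "ZB n mu j (ZB n mu k Z) i = mu j/(mu k/Z k - (mu j-mu k)/(Z j-Z k)) - (mu i - mu j)/((mu k/Z k - (mu i-mu k)/(Z i-Z k)) - (mu k/Z k - (mu j-mu k)/(Z j-Z k)))"
        using iI unfolding ZB_def[of n mu j] z1(2) z1(3)[OF 1] by simp
      have r: "ZB n mu k (ZB n mu j Z) i = mu k/(mu j/Z j - (mu k-mu j)/(Z k-Z j)) - (mu i - mu k)/((mu j/Z j - (mu i-mu j)/(Z i-Z j)) - (mu j/Z j - (mu k-mu j)/(Z k-Z j)))"
        using iI unfolding ZB_def[of n mu k] z2(2) z2(3)[OF 1] by simp
      show ?thesis unfolding l r
        by (rule BB_ZL[OF czk(1) czj(1) ci(1)[OF 1] cjk(1) ci(2)[OF 1] cjk(2) A1(1) Ai(1)[OF 1] A2(1) Ai(2)[OF 1]])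
    next
      case 2
      have l: "ZB n mu j (ZB n mu k Z) i = mu j/(mu k/Z k - (mu j-mu k)/(Z j-Z k)) - (mu k - mu j)/(mu k/Z k - (mu k/Z k - (mu j-mu k)/(Z j-Z k)))"
        using k jk unfolding 2 ZB_def[of n mu j] z1(1,2) by simp
      have r: "ZB n mu k (ZB n mu j Z) i = mu k/(mu j/Z j - (mu k-mu j)/(Z k-Z j))"
        using 2 k jk unfolding ZB_def[of n mu k] z2(2) by simp
      show ?thesis unfolding l r
        by (rule BB_Zk[OF czk(1) czj(1) cjk(1) cjk(2) A1(1) A1(2) A2(1)])
    next
      case 3
      have l: "ZB n mu j (ZB n mu k Z) i = mu j/(mu k/Z k - (mu j-mu k)/(Z j-Z k))"
        using 3 j jk unfolding ZB_def[of n mu j] z1(2) by simp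
      have r: "ZB n mu k (ZB n mu j Z) i = mu k/(mu j/Z j - (mu k-mu j)/(Z k-Z j)) - (mu j - mu k)/(mu j/Z j - (mu j/Z j - (mu k-mu j)/(Z k-Z j)))"
        using j jk unfolding 3 ZB_def[of n mu k] z2(1,2) by simp
      show ?thesis unfolding l r
        by (rule BB_Zk[OF czj(1) czk(1) cjk(2) cjk(1) A2(1) A2(2) A1(1), symmetric])
    next
      case 4
      moreover have "i \<noteq> j" "i \<noteq> k" using 4 j k by auto
      ultimately show ?thesis by (simp add: ZB_def del: atLeastAtMost_iff)
    qed
  qed
  have Yeq: "YB n mu j x (YB n mu k x Y Z a b) (ZB n mu k Z) (a(k:=1-a k)) (b + a k - 1/2) =
        YB n mu k x (YB n mu j x Y Z a b) (ZB n mu j Z) (a(j:=1-a j)) (b + a j - 1/2)"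
  proof
    fix i
    consider "i \<in> L" | "i = k" | "i = j" | "i \<notin> {1..n-1}" by (auto simp: L_def)
    then show "YB n mu j x (YB n mu k x Y Z a b) (ZB n mu k Z) (a(k:=1-a k)) (b + a k - 1/2) i =
        YB n mu k x (YB n mu j x Y Z a b) (ZB n mu j Z) (a(j:=1-a j)) (b + a j - 1/2) i"
    proof cases
      case 1
      then have iI: "i \<in> {1..n-1} - {j}" "i \<in> {1..n-1} - {k}" "i \<noteq> j" "i \<noteq> k" by (auto simp: L_def)
      have l: "YB n mu j x (YB n mu k x Y Z a b) (ZB n mu k Z) (a(k:=1-a k)) (b + a k - 1/2) i =
         ((mu k/Z k - (mu i-mu k)/(Z i-Z k)) - (mu k/Z k - (mu j-mu k)/(Z j-Z k))) / (mu i - mu j) *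
         (((mu k/Z k - (mu i-mu k)/(Z i-Z k)) - (mu k/Z k - (mu j-mu k)/(Z j-Z k))) * ((Z i - Z k)/(mu i-mu k)*((Z i-Z k)*Y i - a i)) - a i)"
        using iI unfolding YB_def[of n mu j] Yo_def[of mu j] z1(2) z1(3)[OF 1] by (simp add: YB_def Yo_def)
      have r: "YB n mu k x (YB n mu j x Y Z a b) (ZB n mu j Z) (a(j:=1-a j)) (b + a j - 1/2) i =
         ((mu j/Z j - (mu i-mu j)/(Z i-Z j)) - (mu j/Z j - (mu k-mu j)/(Z k-Z j))) / (mu i - mu k) *
         (((mu j/Z j - (mu i-mu j)/(Z i-Z j)) - (mu j/Z j - (mu k-mu j)/(Z k-Z j))) * ((Z i - Z j)/(mu i-mu j)*((Z i-Z j)*Y i - a i)) - a i)"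
        using iI unfolding YB_def[of n mu k] Yo_def[of mu k] z2(2) z2(3)[OF 1] by (simp add: YB_def Yo_def)
      show ?thesis unfolding l r
        by (rule BB_YL[OF czk(1) czj(1) ci(1)[OF 1] cjk(1) ci(2)[OF 1] cjk(2) ci(3)[OF 1] ci(4)[OF 1]])
    next
      case 2
      then show ?thesis using BB_comp[OF k j jk c1 c2] by simp
    next
      case 3
      then show ?thesis using BB_comp[OF j k jk[symmetric] c2 c1] by simp
    next
      case 4
      moreover have "i \<noteq> j" "i \<noteq> k" using 4 j k by auto
      ultimately show ?thesis by (simp add: YB_def del: atLeastAtMost_iff)
    qed
  qed
  show ?thesis unfolding s1 s2 Zeq Yeq using jk by (auto simp: fun_upd_twist)
qed



lemma solD: assumes "sys_solution n mu a b S y z" "x \<in> S" "j \<in> {1..n-1}"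
  shows "(y j has_field_derivative (2 * y j x * (z j x + vv n b y z x) - a j)) (at x)"
    "(z j has_field_derivative (- z j x * (z j x + 2 * vv n b y z x) - mu j)) (at x)"
  using assms unfolding sys_solution_def by auto

lemma transfer: assumes "open S" "x \<in> S" "\<And>t. t \<in> S \<Longrightarrow> g t = E t" "(E has_field_derivative D) (at x)" "D = D'"
  shows "(g has_field_derivative D') (at x)"
  using has_field_derivative_transform_within_open[OF assms(4) assms(1,2), of g] assms(3,5) by auto

lemma vx: assumes "x \<noteq> 0" shows "vv n b y z x * x = 2 * ((\<Sum>j=1..n-1. y j x * z j x) + b)"
  using assms unfolding vv_def by (simp add: field_simps)

lemma d_yN: assumes "sys_solution n mu a b S y z" "x \<in> S" "x \<noteq> 0"
  shows "((\<lambda>t. yN n t (\<lambda>j. y j t)) has_field_derivative (2 * vv n b y z x * yN n x (\<lambda>j. y j x) - alphaN n a b)) (at x)"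
proof -
  let ?v = "vv n b y z x"
  have "((\<lambda>t. - t / 2 - (\<Sum>j=1..n-1. y j t)) has_field_derivative (- 1/2 - (\<Sum>j=1..n-1. 2 * y j x * (z j x + ?v) - a j))) (at x)"
    by (intro DERIV_diff DERIV_sum solD[OF assms(1,2)]) (auto intro!: derivative_eq_intros)
  moreover have "- 1/2 - (\<Sum>j=1..n-1. 2 * y j x * (z j x + ?v) - a j) = 2 * ?v * yN n x (\<lambda>j. y j x) - alphaN n a b"
  proof -
    have "(\<Sum>j=1..n-1. 2 * y j x * (z j x + ?v) - a j) = 2 * (\<Sum>j=1..n-1. y j x * z j x) + 2 * ?v * (\<Sum>j=1..n-1. y j x) - (\<Sum>j=1..n-1. a j)"
      by (simp add: sum_subtractf sum.distrib sum_distrib_left algebra_simps)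
    then show ?thesis using vx[OF assms(3), of n b y z] unfolding yN_def alphaN_def
      by (simp add: algebra_simps)
  qed
  ultimately show ?thesis unfolding yN_def by simp
qed


lemma sol_Ak: assumes k: "k \<in> {1..n-1}" and S: "open S" "0 \<notin> S" and sol: "sys_solution n mu a b S y z"
  and T: "\<forall>x\<in>S. trA n mu k x (\<lambda>j. y j x, \<lambda>j. z j x, a, b) = Some (\<lambda>j. y' j x, \<lambda>j. z' j x, a', b')"
  shows "sys_solution n mu a' b' S y' z'"
  unfolding sys_solution_def
proof (intro ballI conjI)
  fix x j assume x: "x \<in> S" and j: "j \<in> {1..n-1}"
  have kn: "k \<noteq> n" using k by auto
  have H: "y k t \<noteq> 0 \<and> (\<forall>i. y' i t = y i t) \<and> (\<forall>i. z' i t = (if i = k then z k t - a k / y k t else z i t))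
     \<and> a' = a(k := - a k) \<and> b' = b + a k" if t: "t \<in> S" for t
  proof -
    have e: "trA n mu k t (\<lambda>j. y j t, \<lambda>j. z j t, a, b) = Some (\<lambda>j. y' j t, \<lambda>j. z' j t, a', b')" using T t by auto
    then have yk: "y k t \<noteq> 0" unfolding trA_k[OF kn] by (auto split: if_splits)
    then have "Some ((\<lambda>j. y j t), (\<lambda>j. z j t)(k := z k t - a k / y k t), a(k := - a k), b + a k) = Some (\<lambda>j. y' j t, \<lambda>j. z' j t, a', b')"
      using e unfolding trA_k[OF kn] by simp
    then have q: "(\<lambda>j. y j t) = (\<lambda>j. y' j t)" "(\<lambda>j. z j t)(k := z k t - a k / y k t) = (\<lambda>j. z' j t)" "a' = a(k := - a k)" "b' = b + a k"
      by auto
    have "y' i t = y i t" for i using fun_cong[OF q(1), of i] by simp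
    moreover have "z' i t = (if i = k then z k t - a k / y k t else z i t)" for i using fun_cong[OF q(2), of i] by simp
    ultimately show ?thesis using yk q(3,4) by blast
  qed
  note Hx = H[OF x]
  have x0: "x \<noteq> 0" using x S by auto
  let ?v = "vv n b y z x"
  have v: "vv n b' y' z' x = ?v"
  proof -
    have "(\<Sum>i=1..n-1. y' i x * z' i x) = (\<Sum>i=1..n-1. y i x * z i x + (if i = k then - a k else 0))"
      by (rule sum.cong[OF refl]) (use Hx in \<open>auto simp: field_simps\<close>)
    also have "\<dots> = (\<Sum>i=1..n-1. y i x * z i x) - a k" using k by (simp add: sum.distrib)
    finally show ?thesis using Hx unfolding vv_def by simp
  qed
  show "(y' j has_field_derivative (2 * y' j x * (z' j x + vv n b' y' z' x) - a' j)) (at x)"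
  proof (rule transfer[OF S(1) x])
    show "y' j t = y j t" if "t \<in> S" for t using H[OF that] by auto
    show "(y j has_field_derivative (2 * y j x * (z j x + ?v) - a j)) (at x)" by (rule solD(1)[OF sol x j])
    show "2 * y j x * (z j x + ?v) - a j = 2 * y' j x * (z' j x + vv n b' y' z' x) - a' j"
      unfolding v using Hx by (auto simp: field_simps)
  qed
  show "(z' j has_field_derivative (- z' j x * (z' j x + 2 * vv n b' y' z' x) - mu j)) (at x)"
  proof (cases "j = k")
    case False
    show ?thesis
    proof (rule transfer[OF S(1) x])
      show "z' j t = z j t" if "t \<in> S" for t using H[OF that] False by auto
      show "(z j has_field_derivative (- z j x * (z j x + 2 * ?v) - mu j)) (at x)" by (rule solD(2)[OF sol x j])
      show "- z j x * (z j x + 2 * ?v) - mu j = - z' j x * (z' j x + 2 * vv n b' y' z' x) - mu j"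
        unfolding v using Hx False by auto
    qed
  next
    case True
    show ?thesis
    proof (rule transfer[OF S(1) x])
      show "z' j t = z k t - a k / y k t" if "t \<in> S" for t using H[OF that] True by auto
      show "((\<lambda>t. z k t - a k / y k t) has_field_derivative
         ((- z k x * (z k x + 2 * ?v) - mu k) - ((0 * y k x - a k * (2 * y k x * (z k x + ?v) - a k)) / (y k x * y k x)))) (at x)"
        by (intro DERIV_diff DERIV_divide solD[OF sol x k] DERIV_const) (use Hx in auto)
      show "(- z k x * (z k x + 2 * ?v) - mu k) - ((0 * y k x - a k * (2 * y k x * (z k x + ?v) - a k)) / (y k x * y k x))
         = - z' j x * (z' j x + 2 * vv n b' y' z' x) - mu j"
        unfolding v using Hx True by (simp add: field_simps)
    qed
  qed
qed


lemma sol_An: assumes S: "open S" "0 \<notin> S" and sol: "sys_solution n mu a b S y z"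
  and T: "\<forall>x\<in>S. trA n mu n x (\<lambda>j. y j x, \<lambda>j. z j x, a, b) = Some (\<lambda>j. y' j x, \<lambda>j. z' j x, a', b')"
  shows "sys_solution n mu a' b' S y' z'"
  unfolding sys_solution_def
proof (intro ballI conjI)
  fix x j assume x: "x \<in> S" and j: "j \<in> {1..n-1}"
  let ?yN = "\<lambda>t. yN n t (\<lambda>j. y j t)"
  let ?al = "alphaN n a b"
  have H: "?yN t \<noteq> 0 \<and> (\<forall>i. y' i t = y i t) \<and> (\<forall>i\<in>{1..n-1}. z' i t = z i t + ?al / ?yN t)
     \<and> a' = a \<and> b' = b + ?al" if t: "t \<in> S" for t
  proof -
    have e: "trA n mu n t (\<lambda>j. y j t, \<lambda>j. z j t, a, b) = Some (\<lambda>j. y' j t, \<lambda>j. z' j t, a', b')" using T t by auto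
    then have yk: "?yN t \<noteq> 0" unfolding trA_n' by (auto split: if_splits)
    have "Some ((\<lambda>j. y j t), ZAn n t (\<lambda>j. y j t) (\<lambda>j. z j t) a b, a, b + ?al) = Some (\<lambda>j. y' j t, \<lambda>j. z' j t, a', b')"
      by (rule trans[OF _ e]) (simp add: trA_n' yk)
    note qq = this[unfolded option.inject prod.inject]
    then have q: "(\<lambda>j. y j t) = (\<lambda>j. y' j t)" "ZAn n t (\<lambda>j. y j t) (\<lambda>j. z j t) a b = (\<lambda>j. z' j t)" "a' = a" "b' = b + ?al"
      by blast+
    have "y' i t = y i t" for i using fun_cong[OF q(1), of i] by simp
    moreover have "z' i t = z i t + ?al / ?yN t" if "i \<in> {1..n-1}" for i using fun_cong[OF q(2), of i] that by (simp add: ZAn_def)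
    ultimately show ?thesis using yk q(3,4) by blast
  qed
  note Hx = H[OF x]
  have x0: "x \<noteq> 0" using x S by auto
  let ?v = "vv n b y z x"
  let ?w = "?al / ?yN x"
  have v: "vv n b' y' z' x = ?v - ?w"
  proof -
    have "(\<Sum>i=1..n-1. y' i x * z' i x) = (\<Sum>i=1..n-1. y i x * z i x + ?w * y i x)"
      by (rule sum.cong[OF refl]) (use Hx in \<open>auto simp: algebra_simps\<close>)
    also have "\<dots> = (\<Sum>i=1..n-1. y i x * z i x) + ?w * (\<Sum>i=1..n-1. y i x)" by (simp add: sum.distrib sum_distrib_left)
    finally have s: "(\<Sum>i=1..n-1. y' i x * z' i x) = (\<Sum>i=1..n-1. y i x * z i x) + ?w * (\<Sum>i=1..n-1. y i x)" .
    have yy: "(\<Sum>i=1..n-1. y i x) = - x/2 - ?yN x" unfolding yN_def by simp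
    show ?thesis using Hx x0 unfolding vv_def s yy by (simp add: field_simps)
  qed
  show "(y' j has_field_derivative (2 * y' j x * (z' j x + vv n b' y' z' x) - a' j)) (at x)"
  proof (rule transfer[OF S(1) x])
    show "y' j t = y j t" if "t \<in> S" for t using H[OF that] by auto
    show "(y j has_field_derivative (2 * y j x * (z j x + ?v) - a j)) (at x)" by (rule solD(1)[OF sol x j])
    show "2 * y j x * (z j x + ?v) - a j = 2 * y' j x * (z' j x + vv n b' y' z' x) - a' j"
      unfolding v using Hx j by auto
  qed
  show "(z' j has_field_derivative (- z' j x * (z' j x + 2 * vv n b' y' z' x) - mu j)) (at x)"
  proof (rule transfer[OF S(1) x])
    show "z' j t = z j t + ?al / ?yN t" if "t \<in> S" for t using H[OF that] j by auto
    show "((\<lambda>t. z j t + ?al / ?yN t) has_field_derivative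
       ((- z j x * (z j x + 2 * ?v) - mu j) + ((0 * ?yN x - ?al * (2 * ?v * ?yN x - ?al)) / (?yN x * ?yN x)))) (at x)"
      by (intro DERIV_add DERIV_divide solD[OF sol x j] DERIV_const d_yN[OF sol x x0]) (use Hx in auto)
    show "(- z j x * (z j x + 2 * ?v) - mu j) + ((0 * ?yN x - ?al * (2 * ?v * ?yN x - ?al)) / (?yN x * ?yN x))
       = - z' j x * (z' j x + 2 * vv n b' y' z' x) - mu j"
      unfolding v using Hx j by (simp add: field_simps)
  qed
qed


lemma sol_Bn: assumes S: "open S" "0 \<notin> S" and sol: "sys_solution n mu a b S y z"
  and T: "\<forall>x\<in>S. trB n mu n x (\<lambda>j. y j x, \<lambda>j. z j x, a, b) = Some (\<lambda>j. y' j x, \<lambda>j. z' j x, a', b')"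
  shows "sys_solution n mu a' b' S y' z'"
  unfolding sys_solution_def
proof (intro ballI conjI)
  fix x j assume x: "x \<in> S" and j: "j \<in> {1..n-1}"
  let ?al = "alphaN n a b"
  have H: "(\<forall>i\<in>{1..n-1}. z i t \<noteq> 0 \<and> mu i \<noteq> 0 \<and> y' i t = z i t / mu i * (z i t * y i t - a i) \<and> z' i t = - mu i / z i t)
     \<and> a' = a \<and> b' = b + ?al - 1/2" if t: "t \<in> S" for t
  proof -
    have e: "trB n mu n t (\<lambda>j. y j t, \<lambda>j. z j t, a, b) = Some (\<lambda>j. y' j t, \<lambda>j. z' j t, a', b')" using T t by auto
    then have c: "condBn n mu (\<lambda>j. z j t)" unfolding trB_n' by (auto split: if_splits)
    have "Some (YBn n mu (\<lambda>j. y j t) (\<lambda>j. z j t) a, ZBn n mu (\<lambda>j. z j t), a, b + ?al - 1/2) = Some (\<lambda>j. y' j t, \<lambda>j. z' j t, a', b')"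
      by (rule trans[OF _ e]) (simp add: trB_n' c)
    note qq = this[unfolded option.inject prod.inject]
    then have q: "YBn n mu (\<lambda>j. y j t) (\<lambda>j. z j t) a = (\<lambda>j. y' j t)" "ZBn n mu (\<lambda>j. z j t) = (\<lambda>j. z' j t)" "a' = a" "b' = b + ?al - 1/2"
      by blast+
    have "y' i t = z i t / mu i * (z i t * y i t - a i)" if "i \<in> {1..n-1}" for i
      using fun_cong[OF q(1), of i] that by (simp add: YBn_def)
    moreover have "z' i t = - mu i / z i t" if "i \<in> {1..n-1}" for i
      using fun_cong[OF q(2), of i] that by (simp add: ZBn_def)
    ultimately show ?thesis using c q(3,4) unfolding condBn_def by blast
  qed
  note Hx = H[OF x]
  have x0: "x \<noteq> 0" using x S by auto
  let ?v = "vv n b y z x"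
  have v: "vv n b' y' z' x = - ?v"
  proof -
    have "(\<Sum>i=1..n-1. y' i x * z' i x) = (\<Sum>i=1..n-1. a i - y i x * z i x)"
      by (rule sum.cong[OF refl]) (use Hx in \<open>auto simp: field_simps\<close>)
    then have s: "(\<Sum>i=1..n-1. y' i x * z' i x) = (\<Sum>i=1..n-1. a i) - (\<Sum>i=1..n-1. y i x * z i x)"
      by (simp add: sum_subtractf)
    have b': "b' = - b - (\<Sum>i=1..n-1. a i)" using Hx unfolding alphaN_def by simp
    show ?thesis unfolding vv_def s b' by (simp add: algebra_simps)
  qed
  have zj: "z j x \<noteq> 0" "mu j \<noteq> 0" using Hx j by auto
  show "(y' j has_field_derivative (2 * y' j x * (z' j x + vv n b' y' z' x) - a' j)) (at x)"
  proof (rule transfer[OF S(1) x])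
    show "y' j t = z j t / mu j * (z j t * y j t - a j)" if "t \<in> S" for t using H[OF that] j by auto
    show "((\<lambda>t. z j t / mu j * (z j t * y j t - a j)) has_field_derivative
       (z j x / mu j * (z j x * (2 * y j x * (z j x + ?v) - a j) + (- z j x * (z j x + 2 * ?v) - mu j) * y j x - 0)
        + (((- z j x * (z j x + 2 * ?v) - mu j) * mu j - z j x * 0) / (mu j * mu j)) * (z j x * y j x - a j))) (at x)"
      by (intro DERIV_mult' DERIV_divide DERIV_diff solD[OF sol x j] DERIV_const zj)
    show "z j x / mu j * (z j x * (2 * y j x * (z j x + ?v) - a j) + (- z j x * (z j x + 2 * ?v) - mu j) * y j x - 0)
        + (((- z j x * (z j x + 2 * ?v) - mu j) * mu j - z j x * 0) / (mu j * mu j)) * (z j x * y j x - a j)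
       = 2 * y' j x * (z' j x + vv n b' y' z' x) - a' j"
      unfolding v using Hx j zj by (simp add: field_simps)
  qed
  show "(z' j has_field_derivative (- z' j x * (z' j x + 2 * vv n b' y' z' x) - mu j)) (at x)"
  proof (rule transfer[OF S(1) x])
    show "z' j t = - mu j / z j t" if "t \<in> S" for t using H[OF that] j by auto
    show "((\<lambda>t. - mu j / z j t) has_field_derivative
       ((0 * z j x - (- mu j) * (- z j x * (z j x + 2 * ?v) - mu j)) / (z j x * z j x))) (at x)"
      by (intro DERIV_divide solD[OF sol x j] DERIV_const zj)
    show "(0 * z j x - (- mu j) * (- z j x * (z j x + 2 * ?v) - mu j)) / (z j x * z j x)
       = - z' j x * (z' j x + 2 * vv n b' y' z' x) - mu j"
      unfolding v using Hx j zj by (simp add: field_simps)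
  qed
qed



lemma Bk_yo: fixes zi :: complex assumes "zi - zk \<noteq> 0" "mi - mk \<noteq> 0" "zk \<noteq> 0"
  shows "((zi - zk)/(mi - mk))*(((zi - zk)*(2 * yi * (zi + v) - ai) + ((- zi * (zi + 2 * v) - mi) - (- zk * (zk + 2 * v) - mk))*yi) - 0)
     + ((((- zi * (zi + 2 * v) - mi) - (- zk * (zk + 2 * v) - mk))*(mi - mk) - (zi - zk)*0)/((mi - mk)*(mi - mk)))*((zi-zk)*yi - ai)
   = 2 * ((zi - zk)/(mi - mk)*((zi - zk)*yi - ai)) * ((mk/zk - (mi - mk)/(zi - zk)) + (-(mk/zk + zk) - v)) - ai"
proof -
  obtain i1 i2 i3 where e: "(zi - zk) * i1 = 1" "(mi - mk) * i2 = 1" "zk * i3 = 1" using assms ex_inv by metis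
  show ?thesis unfolding divide_inverse inv_eq[OF e(1)] inv_eq[OF e(2)] inv_eq[OF e(3)] inverse_mult_distrib
    using e by algebra
qed

lemma Bk_term: fixes zi :: complex assumes "zi - zk \<noteq> 0" "mi - mk \<noteq> 0"
  shows "2 * ((zi - zk)/(mi - mk)*((zi - zk)*yi - ai)) * ((mk/zk - (mi - mk)/(zi - zk)) + (-(mk/zk + zk) - v)) - ai
    = - 2 * (zi * yi) + 2 * zk * yi + ai - 2 * (zk + v) * ((zi - zk)/(mi - mk)*((zi - zk)*yi - ai))"
proof -
  obtain i1 i2 where e: "(zi - zk) * i1 = 1" "(mi - mk) * i2 = 1" using assms ex_inv by metis
  show ?thesis unfolding divide_inverse inv_eq[OF e(1)] inv_eq[OF e(2)]
    using e by algebra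
qed

lemma Bk_zj: fixes zi :: complex assumes "zi - zk \<noteq> 0" "zk \<noteq> 0"
  shows "(0 * zk - mk * (- zk * (zk + 2 * v) - mk)) / (zk * zk) - (0 * (zi - zk) - (mi - mk) * ((- zi * (zi + 2 * v) - mi) - (- zk * (zk + 2 * v) - mk))) / ((zi - zk) * (zi - zk))
    = - (mk/zk - (mi - mk)/(zi - zk)) * ((mk/zk - (mi - mk)/(zi - zk)) + 2 * (-(mk/zk + zk) - v)) - mi"
proof -
  obtain i1 i3 where e: "(zi - zk) * i1 = 1" "zk * i3 = 1" using assms ex_inv by metis
  show ?thesis unfolding divide_inverse inv_eq[OF e(1)] inv_eq[OF e(2)] inverse_mult_distrib
    using e by algebra
qed

lemma Bk_zk: fixes zk :: complex assumes "zk \<noteq> 0"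
  shows "(0 * zk - mk * (- zk * (zk + 2 * v) - mk)) / (zk * zk) = - (mk/zk) * ((mk/zk) + 2 * (-(mk/zk + zk) - v)) - mk"
proof -
  obtain i3 where e: "zk * i3 = 1" using assms ex_inv by metis
  show ?thesis unfolding divide_inverse inv_eq[OF e(1)] inverse_mult_distrib
    using e by algebra
qed

lemma Bk_v: fixes zk :: complex assumes "zk \<noteq> 0" "mk \<noteq> 0" "x \<noteq> 0"
  shows "2/x*((mk/zk)*(-x/2 + zk/mk*(zk*(-x/2 - (yk + SKy)) + (1/2 - 2*b - (ak + SKa)))) - SKzy + zk*SKy + SKa + (b + ak - 1/2))
    = -(mk/zk + zk) - 2/x*((zk*yk + SKzy) + b)"
proof -
  obtain i1 i2 i3 where e: "zk * i1 = 1" "mk * i2 = 1" "x * i3 = 1" using assms ex_inv by metis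
  have two: "inverse (2::complex) * 2 = 1" by simp
  show ?thesis unfolding divide_inverse inv_eq[OF e(1)] inv_eq[OF e(2)] inv_eq[OF e(3)]
    using e two by algebra
qed

lemma Bk_final: fixes zk :: complex assumes "zk \<noteq> 0" "mk \<noteq> 0" "x \<noteq> 0" "v * x = 2 * ((zk*yk + SKzy) + b)"
  and d: "yn = -x/2 - (yk + SKy)" "al = 1/2 - 2*b - (ak + SKa)"
  shows "-1/2 - (- 2 * SKzy + 2 * zk * SKy + SKa - 2 * (zk + v) * Q)
     + ((zk/mk)*((zk*(2 * v * yn - al) + (- zk * (zk + 2 * v) - mk)*yn) + 0) + (((- zk * (zk + 2 * v) - mk)*mk - zk*0)/(mk*mk))*(zk*yn + al))
    = 2*(-x/2 - Q + zk/mk*(zk*yn + al))*(mk/zk + (-(mk/zk + zk) - v)) - (1 - ak)"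
proof -
  obtain i1 i2 i3 where e: "zk * i1 = 1" "mk * i2 = 1" "x * i3 = 1" using assms ex_inv by metis
  have two: "inverse (2::complex) * 2 = 1" by simp
  show ?thesis unfolding d divide_inverse inv_eq[OF e(1)] inv_eq[OF e(2)] inv_eq[OF e(3)] inverse_mult_distrib
    using e two assms(4) by algebra
qed


lemma Bk_prod: fixes zi :: complex assumes "zi - zk \<noteq> 0" "mi - mk \<noteq> 0"
  shows "((zi - zk)/(mi - mk)*((zi - zk)*yi - ai)) * (mk/zk - (mi - mk)/(zi - zk))
    = (mk/zk) * ((zi - zk)/(mi - mk)*((zi - zk)*yi - ai)) - (zi * yi - zk * yi - ai)"
proof -
  obtain i1 i2 where e: "(zi - zk) * i1 = 1" "(mi - mk) * i2 = 1" using assms ex_inv by metis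
  show ?thesis unfolding divide_inverse inv_eq[OF e(1)] inv_eq[OF e(2)]
    using e by algebra
qed

lemma sol_Bk: assumes k: "k \<in> {1..n-1}" and S: "open S" "0 \<notin> S" and sol: "sys_solution n mu a b S y z"
  and T: "\<forall>x\<in>S. trB n mu k x (\<lambda>j. y j x, \<lambda>j. z j x, a, b) = Some (\<lambda>j. y' j x, \<lambda>j. z' j x, a', b')"
  shows "sys_solution n mu a' b' S y' z'"
  unfolding sys_solution_def
proof (intro ballI conjI)
  fix x j assume x: "x \<in> S" and j: "j \<in> {1..n-1}"
  have kn: "k \<noteq> n" using k by auto
  define K where "K = {1..n-1} - {k}"
  have H: "condB n mu k (\<lambda>j. z j t) \<and> (\<forall>i. y' i t = YB n mu k t (\<lambda>j. y j t) (\<lambda>j. z j t) a b i)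
     \<and> (\<forall>i. z' i t = ZB n mu k (\<lambda>j. z j t) i) \<and> a' = a(k:=1-a k) \<and> b' = b + a k - 1/2" if t: "t \<in> S" for t
  proof -
    have e: "trB n mu k t (\<lambda>j. y j t, \<lambda>j. z j t, a, b) = Some (\<lambda>j. y' j t, \<lambda>j. z' j t, a', b')" using T t by auto
    then have c: "condB n mu k (\<lambda>j. z j t)" unfolding trB_k'[OF kn] by (auto split: if_splits)
    have "Some (YB n mu k t (\<lambda>j. y j t) (\<lambda>j. z j t) a b, ZB n mu k (\<lambda>j. z j t), a(k:=1-a k), b + a k - 1/2) = Some (\<lambda>j. y' j t, \<lambda>j. z' j t, a', b')"
      by (rule trans[OF _ e]) (simp add: trB_k'[OF kn] c)
    note qq = this[unfolded option.inject prod.inject]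
    then have q: "YB n mu k t (\<lambda>j. y j t) (\<lambda>j. z j t) a b = (\<lambda>j. y' j t)" "ZB n mu k (\<lambda>j. z j t) = (\<lambda>j. z' j t)" "a' = a(k:=1-a k)" "b' = b + a k - 1/2"
      by blast+
    have "y' i t = YB n mu k t (\<lambda>j. y j t) (\<lambda>j. z j t) a b i" for i using fun_cong[OF q(1), of i] by simp
    moreover have "z' i t = ZB n mu k (\<lambda>j. z j t) i" for i using fun_cong[OF q(2), of i] by simp
    ultimately show ?thesis using c q(3,4) by blast
  qed
  note Hx = H[OF x]
  have x0: "x \<noteq> 0" using x S by auto
  define v where "v = vv n b y z x"
  define zk where "zk = z k x"
  define mk where "mk = mu k"
  have czk: "zk \<noteq> 0" "mk \<noteq> 0" using condB_mu(1)[of n mu k "\<lambda>j. z j x"] Hx unfolding zk_def mk_def by auto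
  have ci: "z i x - zk \<noteq> 0" "mu i - mk \<noteq> 0" if "i \<in> K" for i
    using condB_mu(2)[of n mu k "\<lambda>j. z j x" i] Hx that unfolding zk_def mk_def K_def by auto
  define Q where "Q = (\<Sum>i\<in>K. Yo mu k (\<lambda>j. y j x) (\<lambda>j. z j x) a i)"
  define SKzy where "SKzy = (\<Sum>i\<in>K. z i x * y i x)"
  define SKy where "SKy = (\<Sum>i\<in>K. y i x)"
  define SKa where "SKa = (\<Sum>i\<in>K. a i)"
  define yn where "yn = yN n x (\<lambda>j. y j x)"
  define al where "al = alphaN n a b"
  have ynd: "yn = -x/2 - (y k x + SKy)" unfolding yn_def yN_def SKy_def K_def sum_split_k[OF k, of "\<lambda>j. y j x"] ..
  have ald: "al = 1/2 - 2*b - (a k + SKa)" unfolding al_def alphaN_def SKa_def K_def sum_split_k[OF k, of a] ..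
  have vxd: "v * x = 2 * ((zk * y k x + SKzy) + b)"
    unfolding v_def vx[OF x0] zk_def SKzy_def K_def sum_split_k[OF k, of "\<lambda>j. y j x * z j x"] by (simp add: mult.commute)
  have y'k: "y' k x = -x/2 - Q + zk/mk*(zk*yn + al)"
    using Hx k unfolding Q_def zk_def mk_def yn_def al_def K_def by (simp add: YB_def)
  have z'k: "z' k x = mk / zk" using Hx k unfolding zk_def mk_def by (simp add: ZB_def)
  have y'i: "y' i x = (z i x - zk)/(mu i - mk)*((z i x - zk)*y i x - a i)" if "i \<in> K" for i
    using Hx that unfolding zk_def mk_def K_def by (simp add: YB_def Yo_def)
  have z'i: "z' i x = mk/zk - (mu i - mk)/(z i x - zk)" if "i \<in> K" for i
    using Hx that unfolding zk_def mk_def K_def by (simp add: ZB_def)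
  have v': "vv n b' y' z' x = -(mk/zk + zk) - v"
  proof -
    have s1: "(\<Sum>i=1..n-1. y' i x * z' i x) = y' k x * z' k x + (\<Sum>i\<in>K. y' i x * z' i x)"
      unfolding K_def by (rule sum_split_k[OF k])
    have "(\<Sum>i\<in>K. y' i x * z' i x) = (\<Sum>i\<in>K. (mk/zk) * Yo mu k (\<lambda>j. y j x) (\<lambda>j. z j x) a i - (z i x * y i x - zk * y i x - a i))"
    proof (rule sum.cong[OF refl])
      fix i assume i: "i \<in> K"
      show "y' i x * z' i x = (mk/zk) * Yo mu k (\<lambda>j. y j x) (\<lambda>j. z j x) a i - (z i x * y i x - zk * y i x - a i)"
        unfolding y'i[OF i] z'i[OF i] Yo_def zk_def[symmetric] mk_def[symmetric]
        by (rule Bk_prod[OF ci[OF i]])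
    qed
    also have "\<dots> = (mk/zk) * Q - SKzy + zk * SKy + SKa"
      unfolding Q_def SKzy_def SKy_def SKa_def
      by (simp add: sum_subtractf sum.distrib sum_distrib_left algebra_simps)
    finally have s2: "(\<Sum>i\<in>K. y' i x * z' i x) = (mk/zk) * Q - SKzy + zk * SKy + SKa" .
    have "(\<Sum>i=1..n-1. y' i x * z' i x) = (mk/zk)*(-x/2 + zk/mk*(zk*(-x/2 - (y k x + SKy)) + (1/2 - 2*b - (a k + SKa)))) - SKzy + zk*SKy + SKa"
      unfolding s1 s2 y'k z'k ynd[symmetric] ald[symmetric] by (simp add: algebra_simps)
    moreover have "b' = b + a k - 1/2" using Hx by simp
    ultimately have "vv n b' y' z' x = 2/x*((mk/zk)*(-x/2 + zk/mk*(zk*(-x/2 - (y k x + SKy)) + (1/2 - 2*b - (a k + SKa)))) - SKzy + zk*SKy + SKa + (b + a k - 1/2))"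
      unfolding vv_def by simp
    also have "\<dots> = -(mk/zk + zk) - 2/x*((zk*y k x + SKzy) + b)" by (rule Bk_v[OF czk x0])
    also have "2/x*((zk*y k x + SKzy) + b) = v" using vxd x0 by (simp add: field_simps)
    finally show ?thesis .
  qed
  have dZk: "(z k has_field_derivative (- zk * (zk + 2 * v) - mk)) (at x)"
    using solD(2)[OF sol x k] unfolding zk_def mk_def v_def .
  have dYo: "((\<lambda>t. Yo mu k (\<lambda>j. y j t) (\<lambda>j. z j t) a i) has_field_derivative
       (- 2 * (z i x * y i x) + 2 * zk * y i x + a i - 2 * (zk + v) * Yo mu k (\<lambda>j. y j x) (\<lambda>j. z j x) a i)) (at x)"
     "((\<lambda>t. Yo mu k (\<lambda>j. y j t) (\<lambda>j. z j t) a i) has_field_derivative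
       (2 * y' i x * (z' i x + vv n b' y' z' x) - a' i)) (at x)" if i: "i \<in> K" for i
  proof -
    have iI: "i \<in> {1..n-1}" "i \<noteq> k" using i by (auto simp: K_def)
    have raw: "((\<lambda>t. (z i t - z k t)/(mu i - mk) * ((z i t - z k t) * y i t - a i)) has_field_derivative
      ((z i x - zk)/(mu i - mk))*(((z i x - zk)*(2 * y i x * (z i x + v) - a i) + ((- z i x * (z i x + 2 * v) - mu i) - (- zk * (zk + 2 * v) - mk))*y i x) - 0)
     + ((((- z i x * (z i x + 2 * v) - mu i) - (- zk * (zk + 2 * v) - mk))*(mu i - mk) - (z i x - zk)*0)/((mu i - mk)*(mu i - mk)))*((z i x-zk)*y i x - a i)) (at x)"
      using ci[OF i] unfolding zk_def
      by (intro DERIV_mult' DERIV_divide DERIV_diff solD[OF sol x iI(1), folded v_def] dZk[unfolded zk_def] DERIV_const) auto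
    have e: "(\<lambda>t. Yo mu k (\<lambda>j. y j t) (\<lambda>j. z j t) a i) = (\<lambda>t. (z i t - z k t)/(mu i - mk) * ((z i t - z k t) * y i t - a i))"
      unfolding Yo_def mk_def by simp
    have b1: "((z i x - zk)/(mu i - mk))*(((z i x - zk)*(2 * y i x * (z i x + v) - a i) + ((- z i x * (z i x + 2 * v) - mu i) - (- zk * (zk + 2 * v) - mk))*y i x) - 0)
     + ((((- z i x * (z i x + 2 * v) - mu i) - (- zk * (zk + 2 * v) - mk))*(mu i - mk) - (z i x - zk)*0)/((mu i - mk)*(mu i - mk)))*((z i x-zk)*y i x - a i)
     = 2 * ((z i x - zk)/(mu i - mk)*((z i x - zk)*y i x - a i)) * ((mk/zk - (mu i - mk)/(z i x - zk)) + (-(mk/zk + zk) - v)) - a i"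
      by (rule Bk_yo[OF ci[OF i] czk(1)])
    have b2: "2 * ((z i x - zk)/(mu i - mk)*((z i x - zk)*y i x - a i)) * ((mk/zk - (mu i - mk)/(z i x - zk)) + (-(mk/zk + zk) - v)) - a i
      = - 2 * (z i x * y i x) + 2 * zk * y i x + a i - 2 * (zk + v) * Yo mu k (\<lambda>j. y j x) (\<lambda>j. z j x) a i"
      unfolding Yo_def zk_def[symmetric] mk_def[symmetric] by (rule Bk_term[OF ci[OF i]])
    have b3: "2 * ((z i x - zk)/(mu i - mk)*((z i x - zk)*y i x - a i)) * ((mk/zk - (mu i - mk)/(z i x - zk)) + (-(mk/zk + zk) - v)) - a i
      = 2 * y' i x * (z' i x + vv n b' y' z' x) - a' i"
      unfolding y'i[OF i] z'i[OF i] v' using Hx iI by simp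
    show "((\<lambda>t. Yo mu k (\<lambda>j. y j t) (\<lambda>j. z j t) a i) has_field_derivative
       (- 2 * (z i x * y i x) + 2 * zk * y i x + a i - 2 * (zk + v) * Yo mu k (\<lambda>j. y j x) (\<lambda>j. z j x) a i)) (at x)"
      unfolding e by (rule DERIV_cong[OF raw trans[OF b1 b2]])
    show "((\<lambda>t. Yo mu k (\<lambda>j. y j t) (\<lambda>j. z j t) a i) has_field_derivative
       (2 * y' i x * (z' i x + vv n b' y' z' x) - a' i)) (at x)"
      unfolding e by (rule DERIV_cong[OF raw trans[OF b1 b3]])
  qed
  show "(y' j has_field_derivative (2 * y' j x * (z' j x + vv n b' y' z' x) - a' j)) (at x)"
  proof (cases "j = k")
    case False
    then have jK: "j \<in> K" using j by (auto simp: K_def)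
    show ?thesis
    proof (rule transfer[OF S(1) x])
      show "y' j t = Yo mu k (\<lambda>j. y j t) (\<lambda>j. z j t) a j" if "t \<in> S" for t
        using H[OF that] jK unfolding K_def by (simp add: YB_def)
      show "((\<lambda>t. Yo mu k (\<lambda>j. y j t) (\<lambda>j. z j t) a j) has_field_derivative (2 * y' j x * (z' j x + vv n b' y' z' x) - a' j)) (at x)"
        by (rule dYo(2)[OF jK])
    qed simp
  next
    case True
    have dx: "((\<lambda>t. - t / 2) has_field_derivative -1/2) (at x)" by (auto intro!: derivative_eq_intros)
    have dsum: "((\<lambda>t. \<Sum>i\<in>K. Yo mu k (\<lambda>j. y j t) (\<lambda>j. z j t) a i) has_field_derivative
       (\<Sum>i\<in>K. - 2 * (z i x * y i x) + 2 * zk * y i x + a i - 2 * (zk + v) * Yo mu k (\<lambda>j. y j x) (\<lambda>j. z j x) a i)) (at x)"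
      by (rule DERIV_sum) (rule dYo(1))
    have sumv: "(\<Sum>i\<in>K. - 2 * (z i x * y i x) + 2 * zk * y i x + a i - 2 * (zk + v) * Yo mu k (\<lambda>j. y j x) (\<lambda>j. z j x) a i)
       = - 2 * SKzy + 2 * zk * SKy + SKa - 2 * (zk + v) * Q"
      unfolding Q_def SKzy_def SKy_def SKa_def
      by (simp add: sum_subtractf sum.distrib sum_distrib_left sum_negf)
    have dyN: "((\<lambda>t. yN n t (\<lambda>j. y j t)) has_field_derivative (2 * v * yn - al)) (at x)"
      using d_yN[OF sol x x0] unfolding v_def yn_def al_def .
    have raw: "((\<lambda>t. - t / 2 - (\<Sum>i\<in>K. Yo mu k (\<lambda>j. y j t) (\<lambda>j. z j t) a i) + z k t / mu k * (z k t * yN n t (\<lambda>j. y j t) + alphaN n a b))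
      has_field_derivative (-1/2 - (- 2 * SKzy + 2 * zk * SKy + SKa - 2 * (zk + v) * Q)
     + ((zk/mk)*((zk*(2 * v * yn - al) + (- zk * (zk + 2 * v) - mk)*yn) + 0) + (((- zk * (zk + 2 * v) - mk)*mk - zk*0)/(mk*mk))*(zk*yn + al)))) (at x)"
      unfolding sumv[symmetric] al_def[symmetric] using czk unfolding zk_def mk_def yn_def
      by (intro DERIV_add DERIV_diff dx dsum[unfolded zk_def] DERIV_mult' DERIV_divide dZk[unfolded zk_def mk_def] DERIV_const dyN[unfolded yn_def]) auto
    show ?thesis
    proof (rule transfer[OF S(1) x])
      show "y' j t = - t / 2 - (\<Sum>i\<in>K. Yo mu k (\<lambda>j. y j t) (\<lambda>j. z j t) a i) + z k t / mu k * (z k t * yN n t (\<lambda>j. y j t) + alphaN n a b)"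
        if "t \<in> S" for t
        using H[OF that] True k unfolding K_def by (simp add: YB_def)
      show "((\<lambda>t. - t / 2 - (\<Sum>i\<in>K. Yo mu k (\<lambda>j. y j t) (\<lambda>j. z j t) a i) + z k t / mu k * (z k t * yN n t (\<lambda>j. y j t) + alphaN n a b))
      has_field_derivative (-1/2 - (- 2 * SKzy + 2 * zk * SKy + SKa - 2 * (zk + v) * Q)
     + ((zk/mk)*((zk*(2 * v * yn - al) + (- zk * (zk + 2 * v) - mk)*yn) + 0) + (((- zk * (zk + 2 * v) - mk)*mk - zk*0)/(mk*mk))*(zk*yn + al)))) (at x)"
        by (rule raw)
      have "-1/2 - (- 2 * SKzy + 2 * zk * SKy + SKa - 2 * (zk + v) * Q)
     + ((zk/mk)*((zk*(2 * v * yn - al) + (- zk * (zk + 2 * v) - mk)*yn) + 0) + (((- zk * (zk + 2 * v) - mk)*mk - zk*0)/(mk*mk))*(zk*yn + al))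
        = 2*(-x/2 - Q + zk/mk*(zk*yn + al))*(mk/zk + (-(mk/zk + zk) - v)) - (1 - a k)"
        by (rule Bk_final[OF czk x0 vxd ynd ald])
      also have "\<dots> = 2 * y' j x * (z' j x + vv n b' y' z' x) - a' j"
        unfolding True y'k z'k v' using Hx by simp
      finally show "-1/2 - (- 2 * SKzy + 2 * zk * SKy + SKa - 2 * (zk + v) * Q)
     + ((zk/mk)*((zk*(2 * v * yn - al) + (- zk * (zk + 2 * v) - mk)*yn) + 0) + (((- zk * (zk + 2 * v) - mk)*mk - zk*0)/(mk*mk))*(zk*yn + al))
        = 2 * y' j x * (z' j x + vv n b' y' z' x) - a' j" .
    qed
  qed
  show "(z' j has_field_derivative (- z' j x * (z' j x + 2 * vv n b' y' z' x) - mu j)) (at x)"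
  proof (cases "j = k")
    case False
    then have jK: "j \<in> K" using j by (auto simp: K_def)
    show ?thesis
    proof (rule transfer[OF S(1) x])
      show "z' j t = mu k / z k t - (mu j - mu k) / (z j t - z k t)" if "t \<in> S" for t
        using H[OF that] jK unfolding K_def by (simp add: ZB_def)
      show "((\<lambda>t. mu k / z k t - (mu j - mu k) / (z j t - z k t)) has_field_derivative
        ((0 * zk - mk * (- zk * (zk + 2 * v) - mk)) / (zk * zk) - (0 * (z j x - zk) - (mu j - mk) * ((- z j x * (z j x + 2 * v) - mu j) - (- zk * (zk + 2 * v) - mk))) / ((z j x - zk) * (z j x - zk)))) (at x)"
        using ci[OF jK] czk unfolding mk_def zk_def
        by (intro DERIV_diff DERIV_divide DERIV_const dZk[unfolded mk_def zk_def] solD(2)[OF sol x j, folded v_def]) auto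
      show "(0 * zk - mk * (- zk * (zk + 2 * v) - mk)) / (zk * zk) - (0 * (z j x - zk) - (mu j - mk) * ((- z j x * (z j x + 2 * v) - mu j) - (- zk * (zk + 2 * v) - mk))) / ((z j x - zk) * (z j x - zk))
        = - z' j x * (z' j x + 2 * vv n b' y' z' x) - mu j"
        unfolding z'i[OF jK] v' by (rule Bk_zj[OF ci(1)[OF jK] czk(1)])
    qed
  next
    case True
    show ?thesis
    proof (rule transfer[OF S(1) x])
      show "z' j t = mu k / z k t" if "t \<in> S" for t
        using H[OF that] True k by (simp add: ZB_def)
      show "((\<lambda>t. mu k / z k t) has_field_derivative ((0 * zk - mk * (- zk * (zk + 2 * v) - mk)) / (zk * zk))) (at x)"
        using czk unfolding mk_def zk_def
        by (intro DERIV_divide DERIV_const dZk[unfolded mk_def zk_def]) auto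
      show "(0 * zk - mk * (- zk * (zk + 2 * v) - mk)) / (zk * zk) = - z' j x * (z' j x + 2 * vv n b' y' z' x) - mu j"
        unfolding True z'k v' mk_def[symmetric] by (rule Bk_zk[OF czk(1)])
    qed
  qed
qed



lemma in_I: "k \<in> {1..n} \<Longrightarrow> k \<noteq> n \<Longrightarrow> k \<in> {1..n-1}" for k n :: nat by auto

lemma part1: assumes k: "k \<in> {1..n}" and "open S" "0 \<notin> S" "sys_solution n mu a b S y z"
  "\<forall>x\<in>S. bt_map c n mu k x (\<lambda>j. y j x, \<lambda>j. z j x, a, b) = Some (\<lambda>j. y' j x, \<lambda>j. z' j x, a', b')"
  shows "sys_solution n mu a' b' S y' z'"
proof (cases c)
  case True
  note A = assms(5)[unfolded bt_map_def if_P[OF True]]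
  show ?thesis
  proof (cases "k = n")
    case True
    show ?thesis using A unfolding True by (rule sol_Bn[OF assms(2,3,4)])
  next
    case False
    show ?thesis using A by (rule sol_Bk[OF in_I[OF k False] assms(2,3,4)])
  qed
next
  case False
  note A = assms(5)[unfolded bt_map_def if_not_P[OF False]]
  show ?thesis
  proof (cases "k = n")
    case True
    show ?thesis using A unfolding True by (rule sol_An[OF assms(2,3,4)])
  next
    case F: False
    show ?thesis using A by (rule sol_Ak[OF in_I[OF k F] assms(2,3,4)])
  qed
qed

lemma part2: assumes k: "k \<in> {1..n}" and "bt_map c n mu k x s = Some s1" "bt_map c n mu k x s1 = Some s2"
  shows "s2 = s"
proof -
  obtain Y Z a b where s: "s = (Y,Z,a,b)" by (cases s) auto
  show ?thesis
  proof (cases c)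
    case True
    note A = assms(2,3)[unfolded bt_map_def if_P[OF True] s]
    show ?thesis unfolding s
    proof (cases "k = n")
      case True
      show "s2 = (Y,Z,a,b)" using A unfolding True by (rule inv_Bn)
    next
      case False
      show "s2 = (Y,Z,a,b)" using A by (rule inv_Bk[OF in_I[OF k False]])
    qed
  next
    case False
    note A = assms(2,3)[unfolded bt_map_def if_not_P[OF False] s]
    show ?thesis unfolding s
    proof (cases "k = n")
      case True
      show "s2 = (Y,Z,a,b)" using A unfolding True by (rule inv_An)
    next
      case F: False
      show "s2 = (Y,Z,a,b)" using A by (rule inv_Ak[OF F])
    qed
  qed
qed

lemma comm_FT: assumes k: "k \<in> {1..n}" and j: "j \<in> {1..n}" and jk: "j \<noteq> k"
  and "trA n mu k x s = Some t1" "trB n mu j x t1 = Some s1"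
  "trB n mu j x s = Some t2" "trA n mu k x t2 = Some s2"
  shows "s1 = s2"
proof (cases "k = n")
  case True
  then have jI: "j \<in> {1..n-1}" using j jk by auto
  show ?thesis using assms(4-7) unfolding True by (rule comm_AnBk[OF jI])
next
  case False
  note kI = in_I[OF k False]
  show ?thesis
  proof (cases "j = n")
    case True
    show ?thesis using assms(4-7) unfolding True by (rule comm_AkBn[OF kI])
  next
    case False
    show ?thesis using comm_AkBj[OF kI in_I[OF j False] jk assms(4-7)] .
  qed
qed

lemma comm_FF: assumes k: "k \<in> {1..n}" and j: "j \<in> {1..n}" and jk: "j \<noteq> k"
  and "trA n mu k x s = Some t1" "trA n mu j x t1 = Some s1"
  "trA n mu j x s = Some t2" "trA n mu k x t2 = Some s2"
  shows "s1 = s2"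
proof (cases "k = n")
  case True
  then have jI: "j \<in> {1..n-1}" using j jk by auto
  show ?thesis using assms(6,7,4,5) unfolding True by (rule comm_AkAn[OF jI, THEN sym])
next
  case False
  note kI = in_I[OF k False]
  show ?thesis
  proof (cases "j = n")
    case True
    show ?thesis using assms(4-7) unfolding True by (rule comm_AkAn[OF kI])
  next
    case False
    show ?thesis using comm_AA[OF _ False jk[symmetric] assms(4-7)] kI by auto
  qed
qed

lemma comm_TT: assumes k: "k \<in> {1..n}" and j: "j \<in> {1..n}" and jk: "j \<noteq> k"
  and "trB n mu k x s = Some t1" "trB n mu j x t1 = Some s1"
  "trB n mu j x s = Some t2" "trB n mu k x t2 = Some s2"
  shows "s1 = s2"
proof (cases "k = n")
  case True
  then have jI: "j \<in> {1..n-1}" using j jk by auto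
  show ?thesis using assms(6,7,4,5) unfolding True by (rule comm_BkBn[OF jI, THEN sym])
next
  case False
  note kI = in_I[OF k False]
  show ?thesis
  proof (cases "j = n")
    case True
    show ?thesis using assms(4-7) unfolding True by (rule comm_BkBn[OF kI])
  next
    case False
    show ?thesis using comm_BkBj[OF kI in_I[OF j False] jk assms(4-7)] .
  qed
qed

lemma part3: assumes k: "k \<in> {1..n}" and j: "j \<in> {1..n}" and jk: "j \<noteq> k"
  and "bt_map c n mu k x s = Some t1" "bt_map d n mu j x t1 = Some s1"
  "bt_map d n mu j x s = Some t2" "bt_map c n mu k x t2 = Some s2"
  shows "s1 = s2"
proof (cases c)
  case True
  note A = assms(4-7)[unfolded bt_map_def if_P[OF True]]
  show ?thesis
  proof (cases d)
    case True
    show ?thesis using A[unfolded if_P[OF True]] by (rule comm_TT[OF k j jk])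
  next
    case False
    note B = A[unfolded if_not_P[OF False]]
    show ?thesis using B(3,4,1,2) by (rule comm_FT[OF j k jk[symmetric], THEN sym])
  qed
next
  case False
  note A = assms(4-7)[unfolded bt_map_def if_not_P[OF False]]
  show ?thesis
  proof (cases d)
    case True
    show ?thesis using A[unfolded if_P[OF True]] by (rule comm_FT[OF k j jk])
  next
    case False
    show ?thesis using A[unfolded if_not_P[OF False]] by (rule comm_FF[OF k j jk])
  qed
qed

theorem proposition6:
  fixes n :: nat and mu :: "nat \<Rightarrow> complex"
  assumes "n \<ge> 2"
    and "\<forall>j\<in>{1..n-1}. mu j \<noteq> 0"
    and "\<forall>i\<in>{1..n-1}. \<forall>j\<in>{1..n-1}. i \<noteq> j \<longrightarrow> mu i \<noteq> mu j"
  shows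
    "(\<forall>c k S y z a b y' z' a' b'. k \<in> {1..n} \<longrightarrow> open S \<longrightarrow> 0 \<notin> S \<longrightarrow>
        sys_solution n mu a b S y z \<longrightarrow>
        (\<forall>x\<in>S. bt_map c n mu k x (\<lambda>j. y j x, \<lambda>j. z j x, a, b)
                  = Some (\<lambda>j. y' j x, \<lambda>j. z' j x, a', b')) \<longrightarrow>
        sys_solution n mu a' b' S y' z')
   \<and> (\<forall>c k x s s1 s2. k \<in> {1..n} \<longrightarrow>
        bt_map c n mu k x s = Some s1 \<longrightarrow> bt_map c n mu k x s1 = Some s2 \<longrightarrow> s2 = s)
   \<and> (\<forall>c d j k x s s1 s2. j \<in> {1..n} \<longrightarrow> k \<in> {1..n} \<longrightarrow> j \<noteq> k \<longrightarrow>
        Option.bind (bt_map c n mu k x s) (bt_map d n mu j x) = Some s1 \<longrightarrow>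
        Option.bind (bt_map d n mu j x s) (bt_map c n mu k x) = Some s2 \<longrightarrow> s1 = s2)"
proof (intro conjI allI impI)
  fix c k S y z a b y' z' a' b'
  assume "k \<in> {1..n}" "open S" "0 \<notin> S" "sys_solution n mu a b S y z"
    "\<forall>x\<in>S. bt_map c n mu k x (\<lambda>j. y j x, \<lambda>j. z j x, a, b) = Some (\<lambda>j. y' j x, \<lambda>j. z' j x, a', b')"
  then show "sys_solution n mu a' b' S y' z'" by (rule part1)
next
  fix c k x s s1 s2
  assume "k \<in> {1..n}" "bt_map c n mu k x s = Some s1" "bt_map c n mu k x s1 = Some s2"
  then show "s2 = s" by (rule part2)
next
  fix c d j k x s s1 s2
  assume h: "j \<in> {1..n}" "k \<in> {1..n}" "j \<noteq> k"
    "Option.bind (bt_map c n mu k x s) (bt_map d n mu j x) = Some s1"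
    "Option.bind (bt_map d n mu j x s) (bt_map c n mu k x) = Some s2"
  obtain t1 where t1: "bt_map c n mu k x s = Some t1" "bt_map d n mu j x t1 = Some s1"
    using h(4) by (auto simp: bind_eq_Some_conv)
  obtain t2 where t2: "bt_map d n mu j x s = Some t2" "bt_map c n mu k x t2 = Some s2"
    using h(5) by (auto simp: bind_eq_Some_conv)
  show "s1 = s2" by (rule part3[OF h(2,1,3) t1 t2])
qed

end
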